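(* Let $0<q<1$ and let $m_1:=\lim_{n\to\infty}\mathbb{E}\,C_1(\Pi_n)/n$ for $\Pi_n\sim\mathrm{Mallows}(n,q)$ (equivalently $m_1=\mathbb{P}(\Sigma(0)=0)$ for $\Sigma\sim\mathrm{Mallows}(\mathbb{Z},q)$). Then $$m_1=\sum_{s\ge0}\nu_s\,q^{2s}(1-q),\qquad\text{where}\qquad \nu_s=\frac{\prod_{i=1}^s\frac{q^{2i-1}}{(1-q^i)^2}}{\sum_{t\ge0}\prod_{i=1}^t\frac{q^{2i-1}}{(1-q^i)^2}}$$ (empty products equal $1$).
   Context: For $q>0$, $\Pi_n\sim\mathrm{Mallows}(n,q)$ means $\mathbb{P}(\Pi_n=\pi)\propto q^{\mathrm{inv}(\pi)}$ over permutations $\pi$ of $[n]=\{1,\dots,n\}$, where $\mathrm{inv}(\pi)$ is the number of pairs $i<j$ with $\pi(i)>\pi(j)$; $C_1(\pi)$ is the number of fixed points of $\pi$. $\mathrm{Mallows}(\mathbb{Z},q)$ denotes Gnedin and Olshanski's bi-infinite Mallows measure: the law of the random bijection $\Sigma$ of $\mathbb{Z}$ that is the almost sure pointwise limit of its patterns on $\{-n,\dots,n\}$, each of which is $\mathrm{Mallows}(\{-n,\dots,n\},q)$-distributed. *)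

theory Defs
  imports "HOL-Analysis.Analysis" "HOL-Combinatorics.Permutations"
begin

definition inversions :: "nat \<Rightarrow> (nat \<Rightarrow> nat) \<Rightarrow> nat" where
  "inversions n p = card {(i, j). i \<in> {1..n} \<and> j \<in> {1..n} \<and> i < j \<and> p i > p j}"

definition fixed_points :: "nat \<Rightarrow> (nat \<Rightarrow> nat) \<Rightarrow> nat" where
  "fixed_points n p = card {i \<in> {1..n}. p i = i}"

definition mallows_Z :: "real \<Rightarrow> nat \<Rightarrow> real" where
  "mallows_Z q n = (\<Sum>p\<in>{p. p permutes {1..n}}. q ^ inversions n p)"

definition mallows_expected_fixed_points :: "real \<Rightarrow> nat \<Rightarrow> real" where
  "mallows_expected_fixed_points q n =
     (\<Sum>p\<in>{p. p permutes {1..n}}. q ^ inversions n p * real (fixed_points n p)) / mallows_Z q n"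

definition nu_weight :: "real \<Rightarrow> nat \<Rightarrow> real" where
  "nu_weight q s = (\<Prod>i=1..s. q ^ (2 * i - 1) / (1 - q ^ i)^2)"

definition mallows_nu :: "real \<Rightarrow> nat \<Rightarrow> real" where
  "mallows_nu q s = nu_weight q s / (\<Sum>t. nu_weight q t)"

end

theory Submission
  imports Defs
begin


definition invs :: "nat set \<Rightarrow> (nat \<Rightarrow> nat) \<Rightarrow> nat" where
  "invs P p = card {(x,y). x \<in> P \<and> y \<in> P \<and> x < y \<and> p y < p x}"

definition BJ :: "nat set \<Rightarrow> nat set \<Rightarrow> (nat \<Rightarrow> nat) set" where
  "BJ P V = {p. bij_betw p P V \<and> (\<forall>x. x \<notin> P \<longrightarrow> p x = x)}"

definition SW :: "real \<Rightarrow> nat set \<Rightarrow> nat set \<Rightarrow> real" where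
  "SW q P V = (\<Sum>p\<in>BJ P V. q ^ invs P p)"

definition rk :: "nat set \<Rightarrow> nat \<Rightarrow> nat" where
  "rk V v = card {y\<in>V. y < v}"

definition ee :: "real \<Rightarrow> nat \<Rightarrow> real" where
  "ee q j = (\<Sum>t<j. q ^ t)"

definition ff :: "real \<Rightarrow> nat \<Rightarrow> real" where
  "ff q k = (\<Prod>j=1..k. ee q j)"

lemma finite_BJ:
  assumes "finite P" "finite V"
  shows "finite (BJ P V)"
proof -
  have "BJ P V \<subseteq> (\<lambda>f x. if x \<in> P then f x else x) ` (PiE P (\<lambda>_. V))"
  proof
    fix p assume p: "p \<in> BJ P V"
    hence "p = (\<lambda>x. if x \<in> P then restrict p P x else x)"
      by (auto simp: BJ_def)
    moreover have "restrict p P \<in> PiE P (\<lambda>_. V)"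
      using p by (auto simp: BJ_def bij_betw_def)
    ultimately show "p \<in> (\<lambda>f x. if x \<in> P then f x else x) ` (PiE P (\<lambda>_. V))"
      by blast
  qed
  moreover have "finite (PiE P (\<lambda>_. V))" using assms by (simp add: finite_PiE)
  ultimately show ?thesis using finite_subset by blast
qed

lemma invs_remove_min:
  assumes fin: "finite P" and m: "m \<in> P" and mn: "\<forall>x\<in>P. m \<le> x"
    and p: "p \<in> BJ P V" and pm: "p m = v"
  shows "invs P p = rk V v + invs (P - {m}) (p(m:=m))"
proof -
  have bij: "bij_betw p P V" using p by (simp add: BJ_def)
  define S1 where "S1 = Pair m ` {y\<in>P. m < y \<and> p y < v}"
  define S2 where "S2 = {(x,y). x \<in> P - {m} \<and> y \<in> P - {m} \<and> x < y \<and> (p(m:=m)) y < (p(m:=m)) x}"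
  have eq: "{(x,y). x \<in> P \<and> y \<in> P \<and> x < y \<and> p y < p x} = S1 \<union> S2"
    using mn pm m unfolding S1_def S2_def by (auto simp: le_less)
  have fS1: "finite S1" using fin unfolding S1_def by auto
  have fS2: "finite S2" unfolding S2_def
    by (rule finite_subset[of _ "P \<times> P"]) (use fin in auto)
  have disj: "S1 \<inter> S2 = {}" unfolding S1_def S2_def by auto
  have "card S1 = card {y\<in>P. m < y \<and> p y < v}"
    unfolding S1_def by (rule card_image) (simp add: inj_on_def)
  also have "\<dots> = card (p ` {y\<in>P. m < y \<and> p y < v})"
    by (rule card_image[symmetric]) (rule inj_on_subset[OF bij_betw_imp_inj_on[OF bij]], auto)
  also have "p ` {y\<in>P. m < y \<and> p y < v} = {y\<in>V. y < v}"
  proof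
    show "p ` {y \<in> P. m < y \<and> p y < v} \<subseteq> {y \<in> V. y < v}"
      using bij by (auto simp: bij_betw_def)
    show "{y \<in> V. y < v} \<subseteq> p ` {y \<in> P. m < y \<and> p y < v}"
    proof
      fix y assume y: "y \<in> {y \<in> V. y < v}"
      then obtain x where x: "x \<in> P" "p x = y" using bij by (force simp: bij_betw_def)
      have "x \<noteq> m" using x y pm by auto
      hence "m < x" using mn x by force
      thus "y \<in> p ` {y \<in> P. m < y \<and> p y < v}" using x y by auto
    qed
  qed
  finally have c1: "card S1 = rk V v" by (simp add: rk_def)
  have "invs P p = card (S1 \<union> S2)" unfolding invs_def eq ..
  also have "\<dots> = card S1 + card S2" by (rule card_Un_disjoint[OF fS1 fS2 disj])
  also have "card S2 = invs (P - {m}) (p(m:=m))" unfolding invs_def S2_def ..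
  finally show ?thesis using c1 by simp
qed

lemma sum_fix_min:
  assumes fin: "finite P" and m: "m \<in> P" and mn: "\<forall>x\<in>P. m \<le> x" and v: "v \<in> V"
    and finV: "finite V"
  shows "(\<Sum>p\<in>{p\<in>BJ P V. p m = v}. q ^ invs P p) = q ^ rk V v * SW q (P - {m}) (V - {v})"
proof -
  have bb: "bij_betw (\<lambda>p. p(m:=m)) {p\<in>BJ P V. p m = v} (BJ (P - {m}) (V - {v}))"
  proof (rule bij_betw_byWitness[where f' = "\<lambda>s. s(m:=v)"])
    show "\<forall>a\<in>{p \<in> BJ P V. p m = v}. a(m := m, m := v) = a" by auto
    show "\<forall>a'\<in>BJ (P - {m}) (V - {v}). a'(m := v, m := m) = a'"
      by (auto simp: BJ_def fun_eq_iff)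
    show "(\<lambda>p. p(m := m)) ` {p \<in> BJ P V. p m = v} \<subseteq> BJ (P - {m}) (V - {v})"
    proof
      fix s assume "s \<in> (\<lambda>p. p(m := m)) ` {p \<in> BJ P V. p m = v}"
      then obtain p where p: "p \<in> BJ P V" "p m = v" and s: "s = p(m:=m)" by auto
      have bij: "bij_betw p P V" using p by (simp add: BJ_def)
      have "bij_betw p (P - {m}) (V - {v})"
        using bij_betw_DiffI[OF bij, of "{m}" "{v}"] m v p(2) by auto
      hence "bij_betw s (P - {m}) (V - {v})"
        by (rule bij_betw_cong[THEN iffD1, rotated]) (auto simp: s)
      thus "s \<in> BJ (P - {m}) (V - {v})" using p(1) by (auto simp: BJ_def s)
    qed
    show "(\<lambda>s. s(m := v)) ` BJ (P - {m}) (V - {v}) \<subseteq> {p \<in> BJ P V. p m = v}"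
    proof
      fix p assume "p \<in> (\<lambda>s. s(m := v)) ` BJ (P - {m}) (V - {v})"
      then obtain s where s: "s \<in> BJ (P - {m}) (V - {v})" and p: "p = s(m:=v)" by auto
      have bs: "bij_betw s (P - {m}) (V - {v})" using s by (simp add: BJ_def)
      have "bij_betw p (P - {m}) (V - {v})"
        by (rule bij_betw_cong[THEN iffD1, OF _ bs]) (auto simp: p)
      hence "bij_betw p ((P - {m}) \<union> {m}) ((V - {v}) \<union> {p m})"
        by (intro notIn_Un_bij_betw) (auto simp: p)
      moreover have "(P - {m}) \<union> {m} = P" "(V - {v}) \<union> {p m} = V" using m v by (auto simp: p)
      ultimately have "bij_betw p P V" by simp
      thus "p \<in> {p \<in> BJ P V. p m = v}" using s m by (auto simp: BJ_def p)
    qed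
  qed
  have "(\<Sum>p\<in>{p\<in>BJ P V. p m = v}. q ^ invs P p) =
        (\<Sum>p\<in>{p\<in>BJ P V. p m = v}. q ^ rk V v * q ^ invs (P - {m}) (p(m:=m)))"
    by (rule sum.cong) (auto simp: invs_remove_min[OF fin m mn] power_add)
  also have "\<dots> = q ^ rk V v * (\<Sum>p\<in>{p\<in>BJ P V. p m = v}. q ^ invs (P - {m}) (p(m:=m)))"
    by (simp add: sum_distrib_left)
  also have "(\<Sum>p\<in>{p\<in>BJ P V. p m = v}. q ^ invs (P - {m}) (p(m:=m))) = SW q (P - {m}) (V - {v})"
    unfolding SW_def by (rule sum.reindex_bij_betw[OF bb])
  finally show ?thesis .
qed

lemma sum_rk:
  assumes "finite V"
  shows "(\<Sum>v\<in>V. q ^ rk V v) = ee q (card V)"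
  using assms
proof (induction V rule: finite_linorder_max_induct)
  case empty
  then show ?case by (simp add: ee_def)
next
  case (insert b A)
  have bA: "b \<notin> A" using insert by auto
  have "(\<Sum>v\<in>insert b A. q ^ rk (insert b A) v) = q ^ rk (insert b A) b + (\<Sum>v\<in>A. q ^ rk (insert b A) v)"
    using insert bA by simp
  also have "(\<Sum>v\<in>A. q ^ rk (insert b A) v) = (\<Sum>v\<in>A. q ^ rk A v)"
  proof (rule sum.cong)
    fix v assume "v \<in> A"
    hence "{y \<in> insert b A. y < v} = {y\<in>A. y < v}" using insert by auto
    thus "q ^ rk (insert b A) v = q ^ rk A v" by (simp add: rk_def)
  qed simp
  also have "rk (insert b A) b = card A"
  proof -
    have "{y \<in> insert b A. y < b} = A" using insert by auto
    thus ?thesis by (simp add: rk_def)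
  qed
  finally show ?case using insert bA by (simp add: ee_def)
qed

lemma ff_Suc: "ff q (Suc k) = ee q (Suc k) * ff q k"
  unfolding ff_def by (simp add: prod.cl_ivl_Suc mult.commute)

lemma BJ_empty: "BJ {} {} = {id}"
  by (auto simp: BJ_def fun_eq_iff)

lemma SW_card:
  assumes "finite P" "finite V" "card P = card V"
  shows "SW q P V = ff q (card P)"
  using assms
proof (induction "card P" arbitrary: P V)
  case 0
  hence "P = {}" "V = {}" by auto
  thus ?case by (simp add: SW_def BJ_empty invs_def ff_def)
next
  case (Suc k)
  hence Pne: "P \<noteq> {}" by auto
  define m where "m = Min P"
  have m: "m \<in> P" "\<forall>x\<in>P. m \<le> x" using Suc Pne by (auto simp: m_def)
  have "SW q P V = (\<Sum>v\<in>V. \<Sum>p\<in>{p\<in>BJ P V. p m = v}. q ^ invs P p)"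
    unfolding SW_def
    by (rule sum.group[symmetric]) (use Suc m finite_BJ[of P V] in \<open>auto simp: BJ_def bij_betw_def\<close>)
  also have "\<dots> = (\<Sum>v\<in>V. q ^ rk V v * ff q k)"
  proof (rule sum.cong)
    fix v assume v: "v \<in> V"
    have "SW q (P - {m}) (V - {v}) = ff q (card (P - {m}))"
      by (rule Suc.hyps) (use Suc m v in auto)
    also have "card (P - {m}) = k" using Suc m by auto
    finally show "(\<Sum>p\<in>{p\<in>BJ P V. p m = v}. q ^ invs P p) = q ^ rk V v * ff q k"
      using sum_fix_min[OF Suc.prems(1) m v Suc.prems(2)] by simp
  qed simp
  also have "\<dots> = ee q (card V) * ff q k"
    by (simp add: sum_distrib_right[symmetric] sum_rk Suc.prems)
  also have "\<dots> = ff q (card P)"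
    using Suc by (metis ff_Suc)
  finally show ?case .
qed



definition mg :: "nat set \<Rightarrow> (nat \<Rightarrow> nat) \<Rightarrow> (nat \<Rightarrow> nat) \<Rightarrow> nat \<Rightarrow> nat" where
  "mg P1 p1 p2 = (\<lambda>x. if x \<in> P1 then p1 x else p2 x)"

definition cross :: "nat set \<Rightarrow> nat set \<Rightarrow> nat" where
  "cross V A = card {(u,w). u \<in> A \<and> w \<in> V - A \<and> w < u}"

lemma invs_mg:
  assumes f1: "finite P1" and f2: "finite P2" and disj: "P1 \<inter> P2 = {}"
    and ord: "\<forall>x\<in>P1. \<forall>y\<in>P2. x < y"
    and p1: "p1 \<in> BJ P1 A" and p2: "p2 \<in> BJ P2 (V - A)"
  shows "invs (P1 \<union> P2) (mg P1 p1 p2) = invs P1 p1 + invs P2 p2 + cross V A"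
proof -
  let ?p = "mg P1 p1 p2"
  define S11 where "S11 = {(x,y). x \<in> P1 \<and> y \<in> P1 \<and> x < y \<and> p1 y < p1 x}"
  define S22 where "S22 = {(x,y). x \<in> P2 \<and> y \<in> P2 \<and> x < y \<and> p2 y < p2 x}"
  define S12 where "S12 = {(x,y). x \<in> P1 \<and> y \<in> P2 \<and> p2 y < p1 x}"
  have b1: "bij_betw p1 P1 A" and b2: "bij_betw p2 P2 (V - A)" using p1 p2 by (auto simp: BJ_def)
  have eq: "{(x,y). x \<in> P1 \<union> P2 \<and> y \<in> P1 \<union> P2 \<and> x < y \<and> ?p y < ?p x} = S11 \<union> S22 \<union> S12"
    using disj ord unfolding S11_def S22_def S12_def mg_def by (auto; force)
  have fin: "finite S11" "finite S22" "finite S12"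
    unfolding S11_def S22_def S12_def
    by (rule finite_subset[of _ "P1 \<times> P1"], use f1 in auto)
       (rule finite_subset[of _ "P2 \<times> P2"], use f2 in auto,
        rule finite_subset[of _ "P1 \<times> P2"], use f1 f2 in auto)
  have c12: "card S12 = cross V A"
  proof -
    have "card S12 = card (map_prod p1 p2 ` S12)"
    proof (rule card_image[symmetric])
      show "inj_on (map_prod p1 p2) S12"
        using bij_betw_imp_inj_on[OF b1] bij_betw_imp_inj_on[OF b2]
        unfolding S12_def inj_on_def by auto
    qed
    also have "map_prod p1 p2 ` S12 = {(u,w). u \<in> A \<and> w \<in> V - A \<and> w < u}"
    proof
      show "map_prod p1 p2 ` S12 \<subseteq> {(u, w). u \<in> A \<and> w \<in> V - A \<and> w < u}"
        using b1 b2 unfolding S12_def bij_betw_def by auto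
      show "{(u, w). u \<in> A \<and> w \<in> V - A \<and> w < u} \<subseteq> map_prod p1 p2 ` S12"
      proof (safe)
        fix u w assume u: "u \<in> A" and w: "w \<in> V" "w \<notin> A" and wu: "w < u"
        obtain x where x: "x \<in> P1" "p1 x = u" using b1 u unfolding bij_betw_def by force
        obtain y where y: "y \<in> P2" "p2 y = w" using b2 w unfolding bij_betw_def by force
        show "(u, w) \<in> map_prod p1 p2 ` S12"
          using x y wu unfolding S12_def by (auto intro!: image_eqI[of _ _ "(x,y)"])
      qed
    qed
    finally show ?thesis by (simp add: cross_def)
  qed
  have "invs (P1 \<union> P2) ?p = card (S11 \<union> S22 \<union> S12)" unfolding invs_def eq ..
  also have "\<dots> = card S11 + card S22 + card S12"
    using fin disj ord
    by (subst card_Un_disjoint, auto simp: S11_def S22_def S12_def)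
       (subst card_Un_disjoint, auto simp: S11_def S22_def)
  finally show ?thesis using c12 by (simp add: invs_def S11_def S22_def)
qed

lemma mg_bij:
  assumes disj: "P1 \<inter> P2 = {}" and AV: "A \<subseteq> V"
  shows "bij_betw (\<lambda>(p1,p2). mg P1 p1 p2) (BJ P1 A \<times> BJ P2 (V - A))
           {p \<in> BJ (P1 \<union> P2) V. p ` P1 = A}"
proof (rule bij_betw_byWitness[where f' = "\<lambda>p. (\<lambda>x. if x \<in> P1 then p x else x, \<lambda>x. if x \<in> P2 then p x else x)"])
  show "\<forall>a\<in>BJ P1 A \<times> BJ P2 (V - A).
       (\<lambda>p. (\<lambda>x. if x \<in> P1 then p x else x, \<lambda>x. if x \<in> P2 then p x else x)) ((\<lambda>(p1, p2). mg P1 p1 p2) a) = a"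
    using disj by (auto simp: BJ_def mg_def fun_eq_iff)
  show "\<forall>a'\<in>{p \<in> BJ (P1 \<union> P2) V. p ` P1 = A}.
       (\<lambda>(p1, p2). mg P1 p1 p2) ((\<lambda>x. if x \<in> P1 then a' x else x, \<lambda>x. if x \<in> P2 then a' x else x)) = a'"
    by (auto simp: BJ_def mg_def fun_eq_iff)
  show "(\<lambda>(p1, p2). mg P1 p1 p2) ` (BJ P1 A \<times> BJ P2 (V - A)) \<subseteq> {p \<in> BJ (P1 \<union> P2) V. p ` P1 = A}"
  proof
    fix p assume "p \<in> (\<lambda>(p1, p2). mg P1 p1 p2) ` (BJ P1 A \<times> BJ P2 (V - A))"
    then obtain p1 p2 where p1: "p1 \<in> BJ P1 A" and p2: "p2 \<in> BJ P2 (V - A)" and pd: "p = mg P1 p1 p2"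
      by auto
    have b1: "bij_betw p1 P1 A" and b2: "bij_betw p2 P2 (V - A)" using p1 p2 by (auto simp: BJ_def)
    have "bij_betw (mg P1 p1 p2) P1 A"
      by (rule bij_betw_cong[THEN iffD1, OF _ b1]) (auto simp: mg_def)
    moreover have "bij_betw (mg P1 p1 p2) P2 (V - A)"
      by (rule bij_betw_cong[THEN iffD1, OF _ b2]) (use disj in \<open>auto simp: mg_def\<close>)
    ultimately have "bij_betw (mg P1 p1 p2) (P1 \<union> P2) (A \<union> (V - A))"
      by (rule bij_betw_combine) auto
    moreover have "A \<union> (V - A) = V" using AV by auto
    ultimately have "mg P1 p1 p2 \<in> BJ (P1 \<union> P2) V"
      using p1 p2 by (auto simp: BJ_def mg_def)
    moreover have "mg P1 p1 p2 ` P1 = A" using b1 by (auto simp: mg_def bij_betw_def)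
    ultimately show "p \<in> {p \<in> BJ (P1 \<union> P2) V. p ` P1 = A}" by (simp add: pd)
  qed
  show "(\<lambda>p. (\<lambda>x. if x \<in> P1 then p x else x, \<lambda>x. if x \<in> P2 then p x else x)) `
    {p \<in> BJ (P1 \<union> P2) V. p ` P1 = A} \<subseteq> BJ P1 A \<times> BJ P2 (V - A)"
  proof
    fix pp assume "pp \<in> (\<lambda>p. (\<lambda>x. if x \<in> P1 then p x else x, \<lambda>x. if x \<in> P2 then p x else x)) `
      {p \<in> BJ (P1 \<union> P2) V. p ` P1 = A}"
    then obtain p where p: "p \<in> BJ (P1 \<union> P2) V" and pA: "p ` P1 = A"
      and ppd: "pp = (\<lambda>x. if x \<in> P1 then p x else x, \<lambda>x. if x \<in> P2 then p x else x)" by auto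
    have b: "bij_betw p (P1 \<union> P2) V" using p by (auto simp: BJ_def)
    have inj: "inj_on p (P1 \<union> P2)" using b by (auto simp: bij_betw_def)
    have "bij_betw p P1 A" using pA inj_on_subset[OF inj] by (auto simp: bij_betw_def)
    hence "bij_betw (\<lambda>x. if x \<in> P1 then p x else x) P1 A"
      by (rule bij_betw_cong[THEN iffD1, rotated]) auto
    hence i1: "(\<lambda>x. if x \<in> P1 then p x else x) \<in> BJ P1 A" by (auto simp: BJ_def)
    have im: "p ` P2 = V - A"
    proof
      show "p ` P2 \<subseteq> V - A"
      proof
        fix y assume "y \<in> p ` P2"
        then obtain x where x: "x \<in> P2" "y = p x" by auto
        have "y \<in> V" using b x by (auto simp: bij_betw_def)
        moreover have "y \<notin> A"
        proof
          assume "y \<in> A"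
          then obtain z where "z \<in> P1" "p z = y" using pA by auto
          with x inj disj show False by (auto simp: inj_on_def)
        qed
        ultimately show "y \<in> V - A" by auto
      qed
      show "V - A \<subseteq> p ` P2"
      proof
        fix y assume y: "y \<in> V - A"
        then obtain x where "x \<in> P1 \<union> P2" "p x = y" using b by (force simp: bij_betw_def)
        thus "y \<in> p ` P2" using y pA by auto
      qed
    qed
    have "bij_betw p P2 (V - A)" using im inj_on_subset[OF inj] by (auto simp: bij_betw_def)
    hence "bij_betw (\<lambda>x. if x \<in> P2 then p x else x) P2 (V - A)"
      by (rule bij_betw_cong[THEN iffD1, rotated]) auto
    hence "(\<lambda>x. if x \<in> P2 then p x else x) \<in> BJ P2 (V - A)" by (auto simp: BJ_def)
    with i1 show "pp \<in> BJ P1 A \<times> BJ P2 (V - A)" by (simp add: ppd)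
  qed
qed

lemma cut_sum:
  assumes f1: "finite P1" and f2: "finite P2" and fV: "finite V" and disj: "P1 \<inter> P2 = {}"
  shows "(\<Sum>p\<in>BJ (P1 \<union> P2) V. F p) =
    (\<Sum>A\<in>{A. A \<subseteq> V \<and> card A = card P1}. \<Sum>pp\<in>BJ P1 A \<times> BJ P2 (V - A). F (mg P1 (fst pp) (snd pp)))"
proof -
  have "(\<Sum>p\<in>BJ (P1 \<union> P2) V. F p) =
      (\<Sum>A\<in>{A. A \<subseteq> V \<and> card A = card P1}. \<Sum>p\<in>{p\<in>BJ (P1 \<union> P2) V. p ` P1 = A}. F p)"
  proof (rule sum.group[symmetric])
    show "finite (BJ (P1 \<union> P2) V)" using f1 f2 fV by (simp add: finite_BJ)
    show "finite {A. A \<subseteq> V \<and> card A = card P1}" using fV by simp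
    show "(\<lambda>p. p ` P1) ` BJ (P1 \<union> P2) V \<subseteq> {A. A \<subseteq> V \<and> card A = card P1}"
    proof safe
      fix p assume p: "p \<in> BJ (P1 \<union> P2) V"
      hence b: "bij_betw p (P1 \<union> P2) V" by (auto simp: BJ_def)
      thus "\<And>x. x \<in> P1 \<Longrightarrow> p x \<in> V" by (auto simp: bij_betw_def)
      show "card (p ` P1) = card P1"
        by (rule card_image) (use b in \<open>auto simp: bij_betw_def intro: inj_on_subset\<close>)
    qed
  qed
  also have "\<dots> = (\<Sum>A\<in>{A. A \<subseteq> V \<and> card A = card P1}. \<Sum>pp\<in>BJ P1 A \<times> BJ P2 (V - A). F (mg P1 (fst pp) (snd pp)))"
  proof (rule sum.cong[OF refl])
    fix A assume "A \<in> {A. A \<subseteq> V \<and> card A = card P1}"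
    hence AV: "A \<subseteq> V" by auto
    show "(\<Sum>p\<in>{p\<in>BJ (P1 \<union> P2) V. p ` P1 = A}. F p) = (\<Sum>pp\<in>BJ P1 A \<times> BJ P2 (V - A). F (mg P1 (fst pp) (snd pp)))"
      using sum.reindex_bij_betw[OF mg_bij[OF disj AV], of F]
      by (simp add: case_prod_beta')
  qed
  finally show ?thesis .
qed



definition GS :: "real \<Rightarrow> nat set \<Rightarrow> nat \<Rightarrow> real" where
  "GS q U k = (\<Sum>A\<in>{A. A \<subseteq> U \<and> card A = k}. q ^ cross U A)"

fun gq :: "real \<Rightarrow> nat \<Rightarrow> nat \<Rightarrow> real" where
  "gq q 0 k = (if k = 0 then 1 else 0)"
| "gq q (Suc m) k = gq q m k + (if k = 0 then 0 else q ^ (Suc m - k) * gq q m (k - 1))"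

lemma gq_0 [simp]: "gq q m 0 = 1"
  by (induction m) auto

lemma cross_insert_out:
  assumes "\<forall>a\<in>U. a < b" "A \<subseteq> U"
  shows "cross (insert b U) A = cross U A"
proof -
  have "{(u,w). u \<in> A \<and> w \<in> insert b U - A \<and> w < u} = {(u,w). u \<in> A \<and> w \<in> U - A \<and> w < u}"
    using assms by fastforce
  thus ?thesis by (simp add: cross_def)
qed

lemma cross_insert_in:
  assumes U: "finite U" and lt: "\<forall>a\<in>U. a < b" and AU: "A \<subseteq> U"
  shows "cross (insert b U) (insert b A) = cross U A + (card U - card A)"
proof -
  have bU: "b \<notin> U" using lt by auto
  have eq: "{(u,w). u \<in> insert b A \<and> w \<in> insert b U - insert b A \<and> w < u} =
        {(u,w). u \<in> A \<and> w \<in> U - A \<and> w < u} \<union> Pair b ` (U - A)"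
    using lt AU by auto
  have f1: "finite {(u,w). u \<in> A \<and> w \<in> U - A \<and> w < u}"
    by (rule finite_subset[of _ "U \<times> U"]) (use U AU in auto)
  have d: "{(u,w). u \<in> A \<and> w \<in> U - A \<and> w < u} \<inter> Pair b ` (U - A) = {}"
    using bU AU by auto
  have "card (Pair b ` (U - A)) = card (U - A)" by (rule card_image) (simp add: inj_on_def)
  also have "\<dots> = card U - card A" using U AU by (simp add: card_Diff_subset finite_subset)
  finally have c: "card (Pair b ` (U - A)) = card U - card A" .
  have f2: "finite (Pair b ` (U - A))" using U by simp
  have "cross (insert b U) (insert b A) = card ({(u,w). u \<in> A \<and> w \<in> U - A \<and> w < u} \<union> Pair b ` (U - A))"
    unfolding cross_def eq ..
  also have "\<dots> = card {(u,w). u \<in> A \<and> w \<in> U - A \<and> w < u} + card (Pair b ` (U - A))"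
    by (rule card_Un_disjoint[OF f1 f2 d])
  finally show ?thesis using c by (simp add: cross_def)
qed

lemma GS_card:
  assumes "finite U"
  shows "GS q U k = gq q (card U) k"
  using assms
proof (induction U arbitrary: k rule: finite_linorder_max_induct)
  case empty
  show ?case
  proof (cases "k = 0")
    case True
    hence e: "{A. A \<subseteq> {} \<and> card A = k} = {{}}" by auto
    show ?thesis unfolding GS_def e using True by (simp add: cross_def)
  next
    case False
    hence e: "{A. A \<subseteq> {} \<and> card A = k} = {}" by auto
    show ?thesis unfolding GS_def e using False by simp
  qed
next
  case (insert b U)
  have bU: "b \<notin> U" using insert by auto
  show ?case
  proof (cases k)
    case 0
    have "{A. A \<subseteq> insert b U \<and> card A = k} = {{}}" "{A. A \<subseteq> U \<and> card A = k} = {{}}"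
      using 0 insert(1) by (auto dest: finite_subset)
    moreover have "gq q (card U) 0 = 1" by simp
    ultimately show ?thesis using insert bU 0 by (simp add: GS_def cross_def)
  next
    case (Suc j)
    have split: "{A. A \<subseteq> insert b U \<and> card A = k} =
        {A. A \<subseteq> U \<and> card A = k} \<union> insert b ` {A. A \<subseteq> U \<and> card A = j}"
    proof
      show "{A. A \<subseteq> insert b U \<and> card A = k} \<subseteq> {A. A \<subseteq> U \<and> card A = k} \<union> insert b ` {A. A \<subseteq> U \<and> card A = j}"
      proof
        fix A assume A: "A \<in> {A. A \<subseteq> insert b U \<and> card A = k}"
        show "A \<in> {A. A \<subseteq> U \<and> card A = k} \<union> insert b ` {A. A \<subseteq> U \<and> card A = j}"
        proof (cases "b \<in> A")
          case True
          have "finite A" using A insert(1) by (auto dest: finite_subset)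
          hence "card (A - {b}) = j" using A True Suc by auto
          moreover have "A = insert b (A - {b})" using True by auto
          ultimately show ?thesis using A by blast
        next
          case False thus ?thesis using A by blast
        qed
      qed
      show "{A. A \<subseteq> U \<and> card A = k} \<union> insert b ` {A. A \<subseteq> U \<and> card A = j} \<subseteq> {A. A \<subseteq> insert b U \<and> card A = k}"
      proof
        fix A assume "A \<in> {A. A \<subseteq> U \<and> card A = k} \<union> insert b ` {A. A \<subseteq> U \<and> card A = j}"
        then consider (a) "A \<subseteq> U" "card A = k" | (b) B where "B \<subseteq> U" "card B = j" "A = insert b B"
          by blast
        thus "A \<in> {A. A \<subseteq> insert b U \<and> card A = k}"
        proof cases
          case a thus ?thesis by auto
        next
          case b
          have "finite B" using b insert(1) finite_subset by blast
          moreover have "b \<notin> B" using b bU by auto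
          ultimately show ?thesis using b Suc by auto
        qed
      qed
    qed
    have fin1: "finite {A. A \<subseteq> U \<and> card A = k}" using insert(1) by simp
    have fin2: "finite (insert b ` {A. A \<subseteq> U \<and> card A = j})" using insert(1) by simp
    have disj: "{A. A \<subseteq> U \<and> card A = k} \<inter> insert b ` {A. A \<subseteq> U \<and> card A = j} = {}"
      using bU by auto
    have inj: "inj_on (insert b) {A. A \<subseteq> U \<and> card A = j}"
      using bU unfolding inj_on_def by (metis (mono_tags, lifting) Diff_insert_absorb mem_Collect_eq subset_iff)
    have "GS q (insert b U) k = (\<Sum>A\<in>{A. A \<subseteq> U \<and> card A = k}. q ^ cross (insert b U) A)
        + (\<Sum>A\<in>insert b ` {A. A \<subseteq> U \<and> card A = j}. q ^ cross (insert b U) A)"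
      unfolding GS_def split by (rule sum.union_disjoint[OF fin1 fin2 disj])
    also have "(\<Sum>A\<in>{A. A \<subseteq> U \<and> card A = k}. q ^ cross (insert b U) A) = GS q U k"
      unfolding GS_def by (rule sum.cong) (use insert(2) cross_insert_out in auto)
    also have "(\<Sum>A\<in>insert b ` {A. A \<subseteq> U \<and> card A = j}. q ^ cross (insert b U) A)
        = (\<Sum>A\<in>{A. A \<subseteq> U \<and> card A = j}. q ^ cross (insert b U) (insert b A))"
      by (simp add: sum.reindex[OF inj])
    also have "\<dots> = (\<Sum>A\<in>{A. A \<subseteq> U \<and> card A = j}. q ^ (Suc (card U) - k) * q ^ cross U A)"
    proof (rule sum.cong[OF refl])
      fix A assume A: "A \<in> {A. A \<subseteq> U \<and> card A = j}"
      have "q ^ cross (insert b U) (insert b A) = q ^ (cross U A + (card U - j))"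
        using cross_insert_in[OF insert(1) insert(2)] A by auto
      also have "card U - j = Suc (card U) - k" using Suc by simp
      finally show "q ^ cross (insert b U) (insert b A) = q ^ (Suc (card U) - k) * q ^ cross U A"
        by (simp add: power_add mult.commute)
    qed
    also have "\<dots> = q ^ (Suc (card U) - k) * GS q U j"
      by (simp add: GS_def sum_distrib_left)
    finally show ?thesis using insert(3) Suc insert(1) bU by simp
  qed
qed



lemma cross_split:
  fixes c :: nat
  assumes U: "finite U" and AU: "A \<subseteq> U"
  defines "L \<equiv> {u\<in>U. u < c}" and "R \<equiv> {u\<in>U. c \<le> u}"
  shows "cross U A = cross L (A \<inter> L) + cross R (A \<inter> R) + card (A \<inter> R) * card (L - A)"
proof -
  define S1 where "S1 = {(u,w). u \<in> A \<inter> L \<and> w \<in> L - A \<inter> L \<and> w < u}"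
  define S2 where "S2 = {(u,w). u \<in> A \<inter> R \<and> w \<in> R - A \<inter> R \<and> w < u}"
  define S3 where "S3 = (A \<inter> R) \<times> (L - A)"
  have eq: "{(u,w). u \<in> A \<and> w \<in> U - A \<and> w < u} = S1 \<union> S2 \<union> S3"
    using AU unfolding S1_def S2_def S3_def L_def R_def by auto
  have fin1: "finite S1" unfolding S1_def
    by (rule finite_subset[of _ "U \<times> U"]) (use U in \<open>auto simp: L_def R_def\<close>)
  have fin2: "finite S2" unfolding S2_def
    by (rule finite_subset[of _ "U \<times> U"]) (use U in \<open>auto simp: L_def R_def\<close>)
  have fin3: "finite S3" unfolding S3_def using U by (auto simp: L_def R_def)
  note fin = fin1 fin2 fin3
  have "cross U A = card (S1 \<union> S2 \<union> S3)" unfolding cross_def eq ..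
  also have "\<dots> = card S1 + card S2 + card S3"
    using fin
    by (subst card_Un_disjoint, auto simp: S1_def S2_def S3_def L_def R_def)
       (subst card_Un_disjoint, auto simp: S1_def S2_def L_def R_def)
  also have "card S3 = card (A \<inter> R) * card (L - A)" unfolding S3_def by (rule card_cartesian_product)
  finally show ?thesis by (simp add: cross_def S1_def S2_def)
qed

lemma sum_prod_fst_snd:
  "(\<Sum>BT\<in>X \<times> Y. f (fst BT) * g (snd BT)) = (\<Sum>B\<in>X. f B) * (\<Sum>T\<in>Y. (g T :: real))"
  by (simp add: sum_product sum.cartesian_product case_prod_beta')

lemma split_sum:
  fixes \<phi> :: "nat \<Rightarrow> real" and c :: nat
  assumes U: "finite U"
  defines "L \<equiv> {u\<in>U. u < c}" and "R \<equiv> {u\<in>U. c \<le> u}"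
  shows "(\<Sum>A\<in>{A. A \<subseteq> U \<and> card A = card L}. q ^ cross U A * \<phi> (card (A \<inter> R))) =
         (\<Sum>s\<in>{0..card L}. q ^ (s * s) * \<phi> s * GS q L (card L - s) * GS q R s)"
proof -
  have fL: "finite L" and fR: "finite R" using U by (auto simp: L_def R_def)
  have UL: "U = L \<union> R" "L \<inter> R = {}" by (auto simp: L_def R_def)
  have "(\<Sum>A\<in>{A. A \<subseteq> U \<and> card A = card L}. q ^ cross U A * \<phi> (card (A \<inter> R))) =
    (\<Sum>s\<in>{0..card L}. \<Sum>A\<in>{A \<in> {A. A \<subseteq> U \<and> card A = card L}. card (A \<inter> R) = s}. q ^ cross U A * \<phi> (card (A \<inter> R)))"
  proof (rule sum.group[symmetric])
    show "finite {A. A \<subseteq> U \<and> card A = card L}" using U by simp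
    show "finite {0..card L}" by simp
    show "(\<lambda>A. card (A \<inter> R)) ` {A. A \<subseteq> U \<and> card A = card L} \<subseteq> {0..card L}"
    proof
      fix y assume "y \<in> (\<lambda>A. card (A \<inter> R)) ` {A. A \<subseteq> U \<and> card A = card L}"
      then obtain A where A: "A \<subseteq> U" "card A = card L" and y: "y = card (A \<inter> R)" by auto
      have "card (A \<inter> R) \<le> card A" using U A by (intro card_mono) (auto dest: finite_subset)
      thus "y \<in> {0..card L}" using A y by simp
    qed
  qed
  also have "\<dots> = (\<Sum>s\<in>{0..card L}. q ^ (s * s) * \<phi> s * GS q L (card L - s) * GS q R s)"
  proof (rule sum.cong[OF refl])
    fix s assume s: "s \<in> {0..card L}"
    let ?SB = "{B. B \<subseteq> L \<and> card B = card L - s}" and ?ST = "{T. T \<subseteq> R \<and> card T = s}"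
    let ?SA = "{A \<in> {A. A \<subseteq> U \<and> card A = card L}. card (A \<inter> R) = s}"
    have bb: "bij_betw (\<lambda>(B,T). B \<union> T) (?SB \<times> ?ST) ?SA"
    proof (rule bij_betw_byWitness[where f' = "\<lambda>A. (A \<inter> L, A \<inter> R)"])
      show "\<forall>a\<in>?SB \<times> ?ST. (\<lambda>A. (A \<inter> L, A \<inter> R)) ((\<lambda>(B, T). B \<union> T) a) = a"
        using UL by auto
      show "\<forall>a'\<in>?SA. (\<lambda>(B, T). B \<union> T) (a' \<inter> L, a' \<inter> R) = a'"
        using UL by auto
      show "(\<lambda>(B, T). B \<union> T) ` (?SB \<times> ?ST) \<subseteq> ?SA"
      proof
        fix A assume "A \<in> (\<lambda>(B, T). B \<union> T) ` (?SB \<times> ?ST)"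
        then obtain B T where B: "B \<subseteq> L" "card B = card L - s" and T: "T \<subseteq> R" "card T = s"
          and A: "A = B \<union> T" by auto
        have fB: "finite B" and fT: "finite T" using B T fL fR finite_subset by auto
        have "card A = card B + card T" unfolding A
          by (rule card_Un_disjoint[OF fB fT]) (use B T UL in auto)
        hence "card A = card L" using B T s by simp
        moreover have "A \<inter> R = T" using A B T UL by auto
        ultimately show "A \<in> ?SA" using A B T UL by auto
      qed
      show "(\<lambda>A. (A \<inter> L, A \<inter> R)) ` ?SA \<subseteq> ?SB \<times> ?ST"
      proof
        fix x assume "x \<in> (\<lambda>A. (A \<inter> L, A \<inter> R)) ` ?SA"
        then obtain A where A: "A \<subseteq> U" "card A = card L" "card (A \<inter> R) = s" and x: "x = (A \<inter> L, A \<inter> R)"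
          by auto
        have fA: "finite A" using A U finite_subset by auto
        have "card A = card (A \<inter> L) + card (A \<inter> R)"
        proof -
          have "A = (A \<inter> L) \<union> (A \<inter> R)" using A UL by auto
          hence "card A = card ((A \<inter> L) \<union> (A \<inter> R))" by simp
          also have "\<dots> = card (A \<inter> L) + card (A \<inter> R)"
            by (rule card_Un_disjoint) (use fA UL in auto)
          finally show ?thesis .
        qed
        thus "x \<in> ?SB \<times> ?ST" using A x by auto
      qed
    qed
    have "(\<Sum>A\<in>?SA. q ^ cross U A * \<phi> (card (A \<inter> R))) =
          (\<Sum>BT\<in>?SB \<times> ?ST. q ^ cross U (fst BT \<union> snd BT) * \<phi> (card ((fst BT \<union> snd BT) \<inter> R)))"
      using sum.reindex_bij_betw[OF bb, of "\<lambda>A. q ^ cross U A * \<phi> (card (A \<inter> R))"]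
      by (simp add: case_prod_beta')
    also have "\<dots> = (\<Sum>BT\<in>?SB \<times> ?ST. q ^ (s * s) * \<phi> s * (q ^ cross L (fst BT) * q ^ cross R (snd BT)))"
    proof (rule sum.cong[OF refl])
      fix BT assume "BT \<in> ?SB \<times> ?ST"
      then obtain B T where B: "B \<subseteq> L" "card B = card L - s" and T: "T \<subseteq> R" "card T = s"
        and BT: "BT = (B, T)" by auto
      have fB: "finite B" using B fL finite_subset by auto
      have AU: "B \<union> T \<subseteq> U" using B T UL by auto
      have i1: "(B \<union> T) \<inter> L = B" and i2: "(B \<union> T) \<inter> R = T" using B T UL by auto
      have "L - (B \<union> T) = L - B" using T UL by auto
      moreover have "card (L - B) = card L - card B" using B fB by (simp add: card_Diff_subset)
      moreover have "card B \<le> card L" using B fL by (simp add: card_mono)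
      ultimately have "card (L - (B \<union> T)) = s" using B s by simp
      hence "cross U (B \<union> T) = cross L B + cross R T + s * s"
        using cross_split[OF U AU, of c] i1 i2 T by (simp add: L_def R_def)
      thus "q ^ cross U (fst BT \<union> snd BT) * \<phi> (card ((fst BT \<union> snd BT) \<inter> R)) =
            q ^ (s * s) * \<phi> s * (q ^ cross L (fst BT) * q ^ cross R (snd BT))"
        using i2 T by (simp add: BT power_add)
    qed
    also have "\<dots> = q ^ (s * s) * \<phi> s * (GS q L (card L - s) * GS q R s)"
      using sum_prod_fst_snd[where f = "\<lambda>B. q ^ cross L B" and g = "\<lambda>T. q ^ cross R T" and X = ?SB and Y = ?ST]
      by (simp add: sum_distrib_left[symmetric] GS_def)
    finally show "(\<Sum>A\<in>?SA. q ^ cross U A * \<phi> (card (A \<inter> R))) = q ^ (s * s) * \<phi> s * GS q L (card L - s) * GS q R s"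
      by (simp add: mult.assoc)
  qed
  finally show ?thesis .
qed



lemma ee_Suc: "ee q (Suc n) = ee q n + q ^ n"
  by (simp add: ee_def)

lemma ee_add: "ee q (a + b) = ee q a + q ^ a * ee q b"
  by (induction b) (simp_all add: ee_Suc ee_def[of q 0] algebra_simps power_add)

lemma gq_big: "m < k \<Longrightarrow> gq q m k = 0"
  by (induction m arbitrary: k) auto

lemma gq_ff: "k \<le> m \<Longrightarrow> gq q m k * ff q k * ff q (m - k) = ff q m"
proof (induction m arbitrary: k)
  case 0 thus ?case by (simp add: ff_def)
next
  case (Suc m)
  show ?case
  proof (cases k)
    case 0 thus ?thesis by (simp add: ff_def)
  next
    case (Suc j)
    have jm: "j \<le> m" using Suc \<open>k \<le> Suc m\<close> by simp
    have t2: "q ^ (m - j) * gq q m j * ff q (Suc j) * ff q (Suc m - Suc j) = q ^ (m - j) * ee q (Suc j) * ff q m"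
    proof -
      have "Suc m - Suc j = m - j" by simp
      hence "q ^ (m - j) * gq q m j * ff q (Suc j) * ff q (Suc m - Suc j) =
             q ^ (m - j) * ee q (Suc j) * (gq q m j * ff q j * ff q (m - j))"
        by (simp add: ff_Suc algebra_simps)
      thus ?thesis using Suc.IH[OF jm] by simp
    qed
    have t1: "gq q m (Suc j) * ff q (Suc j) * ff q (Suc m - Suc j) = ee q (m - j) * ff q m"
    proof (cases "j = m")
      case True thus ?thesis by (simp add: gq_big ee_def)
    next
      case False
      hence jm': "Suc j \<le> m" using jm by simp
      have "m - j = Suc (m - Suc j)" using jm' by simp
      hence "ff q (Suc m - Suc j) = ee q (m - j) * ff q (m - Suc j)" by (simp add: ff_Suc)
      hence "gq q m (Suc j) * ff q (Suc j) * ff q (Suc m - Suc j) =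
             ee q (m - j) * (gq q m (Suc j) * ff q (Suc j) * ff q (m - Suc j))" by simp
      thus ?thesis using Suc.IH[OF jm'] by simp
    qed
    have "gq q (Suc m) k * ff q k * ff q (Suc m - k) =
          gq q m (Suc j) * ff q (Suc j) * ff q (Suc m - Suc j) +
          q ^ (m - j) * gq q m j * ff q (Suc j) * ff q (Suc m - Suc j)"
      by (simp add: Suc algebra_simps)
    also have "\<dots> = ff q m * (ee q (m - j) + q ^ (m - j) * ee q (Suc j))"
      using t1 t2 by (simp add: algebra_simps)
    also have "ee q (m - j) + q ^ (m - j) * ee q (Suc j) = ee q (Suc m)"
      using ee_add[of q "m - j" "Suc j"] jm by simp
    finally show ?thesis by (simp add: ff_Suc mult.commute)
  qed
qed



lemma cross_rk_fix:
  assumes i: "1 \<le> i" "i \<le> n" and AU: "A \<subseteq> {1..n} - {i}"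
    and cA: "card A = card {u \<in> {1..n} - {i}. u < i}"
  shows "cross {1..n} A + rk ({1..n} - A) i
       = cross ({1..n} - {i}) A + 2 * card (A \<inter> {u \<in> {1..n} - {i}. i \<le> u})"
proof -
  define U where "U = {1..n} - {i}"
  define L where "L = {u \<in> U. u < i}"
  define R where "R = {u \<in> U. i \<le> u}"
  have fA: "finite A" using AU finite_subset by blast
  have e1: "{(u,w). u \<in> A \<and> w \<in> {1..n} - A \<and> w < u} =
      {(u,w). u \<in> A \<and> w \<in> U - A \<and> w < u} \<union> (\<lambda>u. (u,i)) ` (A \<inter> R)"
    using AU i unfolding U_def R_def by auto
  have f1: "finite {(u,w). u \<in> A \<and> w \<in> U - A \<and> w < u}"
    by (rule finite_subset[of _ "A \<times> A \<union> A \<times> {1..n}"]) (use fA in \<open>auto simp: U_def\<close>)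
  have c1: "cross {1..n} A = cross U A + card (A \<inter> R)"
  proof -
    have "cross {1..n} A = card ({(u,w). u \<in> A \<and> w \<in> U - A \<and> w < u} \<union> (\<lambda>u. (u,i)) ` (A \<inter> R))"
      unfolding cross_def e1 ..
    also have "\<dots> = card {(u,w). u \<in> A \<and> w \<in> U - A \<and> w < u} + card ((\<lambda>u. (u,i)) ` (A \<inter> R))"
      by (rule card_Un_disjoint[OF f1]) (use fA in \<open>auto simp: U_def\<close>)
    also have "card ((\<lambda>u. (u,i)) ` (A \<inter> R)) = card (A \<inter> R)"
      by (rule card_image) (simp add: inj_on_def)
    finally show ?thesis by (simp add: cross_def)
  qed
  have "{y \<in> {1..n} - A. y < i} = L - A" using i unfolding L_def U_def by auto
  hence "rk ({1..n} - A) i = card (L - A)" by (simp add: rk_def)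
  also have "card (L - A) = card L - card (A \<inter> L)"
    by (metis Diff_Diff_Int Int_commute card_Diff_subset finite_Diff finite_Int fA inf_le1 card_Diff_subset_Int
          finite_atLeastAtMost L_def U_def finite_subset mem_Collect_eq subsetI Diff_subset)
  also have "card A = card (A \<inter> L) + card (A \<inter> R)"
  proof -
    have "A = (A \<inter> L) \<union> (A \<inter> R)" using AU unfolding L_def R_def U_def by auto
    hence "card A = card ((A \<inter> L) \<union> (A \<inter> R))" by simp
    also have "\<dots> = card (A \<inter> L) + card (A \<inter> R)"
      by (rule card_Un_disjoint) (use fA in \<open>auto simp: L_def R_def\<close>)
    finally show ?thesis .
  qed
  hence "card L - card (A \<inter> L) = card (A \<inter> R)" using cA unfolding L_def U_def by simp
  finally show ?thesis using c1 unfolding U_def R_def by simp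
qed

lemma inner_fix:
  assumes i: "1 \<le> i" "i \<le> n" and AV: "A \<subseteq> {1..n}" and cA: "card A = i - 1"
  shows "(\<Sum>pp\<in>BJ {1..i-1} A \<times> BJ {i..n} ({1..n} - A).
            (if mg {1..i-1} (fst pp) (snd pp) i = i then q ^ invs ({1..i-1} \<union> {i..n}) (mg {1..i-1} (fst pp) (snd pp)) else 0))
       = ff q (i - 1) * ff q (n - i) * (if i \<notin> A then q ^ (cross {1..n} A + rk ({1..n} - A) i) else 0)"
proof -
  let ?P1 = "{1..i-1}" and ?P2 = "{i..n}" and ?V = "{1..n}"
  have fA: "finite A" using AV finite_subset by blast
  have "(\<Sum>pp\<in>BJ ?P1 A \<times> BJ ?P2 (?V - A).
            (if mg ?P1 (fst pp) (snd pp) i = i then q ^ invs (?P1 \<union> ?P2) (mg ?P1 (fst pp) (snd pp)) else 0))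
      = (\<Sum>pp\<in>BJ ?P1 A \<times> BJ ?P2 (?V - A).
            (q ^ cross ?V A * q ^ invs ?P1 (fst pp)) * (if snd pp i = i then q ^ invs ?P2 (snd pp) else 0))"
  proof (rule sum.cong[OF refl])
    fix pp assume pp: "pp \<in> BJ ?P1 A \<times> BJ ?P2 (?V - A)"
    have "invs (?P1 \<union> ?P2) (mg ?P1 (fst pp) (snd pp)) = invs ?P1 (fst pp) + invs ?P2 (snd pp) + cross ?V A"
      by (rule invs_mg) (use pp in auto)
    moreover have "mg ?P1 (fst pp) (snd pp) i = snd pp i" using i by (auto simp: mg_def)
    ultimately show "(if mg ?P1 (fst pp) (snd pp) i = i then q ^ invs (?P1 \<union> ?P2) (mg ?P1 (fst pp) (snd pp)) else 0) =
       (q ^ cross ?V A * q ^ invs ?P1 (fst pp)) * (if snd pp i = i then q ^ invs ?P2 (snd pp) else 0)"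
      by (simp add: power_add)
  qed
  also have "\<dots> = (\<Sum>p1\<in>BJ ?P1 A. q ^ cross ?V A * q ^ invs ?P1 p1) *
                  (\<Sum>p2\<in>BJ ?P2 (?V - A). if p2 i = i then q ^ invs ?P2 p2 else 0)"
    by (rule sum_prod_fst_snd)
  also have "(\<Sum>p1\<in>BJ ?P1 A. q ^ cross ?V A * q ^ invs ?P1 p1) = q ^ cross ?V A * ff q (i - 1)"
    using SW_card[of ?P1 A q] fA cA by (simp add: SW_def sum_distrib_left[symmetric])
  also have "(\<Sum>p2\<in>BJ ?P2 (?V - A). if p2 i = i then q ^ invs ?P2 p2 else 0)
           = (if i \<notin> A then q ^ rk (?V - A) i * ff q (n - i) else 0)"
  proof -
    have "(\<Sum>p2\<in>BJ ?P2 (?V - A). if p2 i = i then q ^ invs ?P2 p2 else 0)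
        = (\<Sum>p2\<in>{p2\<in>BJ ?P2 (?V - A). p2 i = i}. q ^ invs ?P2 p2)"
      by (rule sum.inter_filter[symmetric]) (simp add: finite_BJ)
    also have "\<dots> = (if i \<notin> A then q ^ rk (?V - A) i * ff q (n - i) else 0)"
    proof (cases "i \<in> A")
      case True
      have "p2 i \<noteq> i" if p2: "p2 \<in> BJ ?P2 (?V - A)" for p2
      proof -
        have "p2 i \<in> p2 ` ?P2" using i by auto
        hence "p2 i \<in> ?V - A" using p2 by (simp add: BJ_def bij_betw_def)
        thus ?thesis using True by auto
      qed
      hence e: "{p2\<in>BJ ?P2 (?V - A). p2 i = i} = {}" by auto
      show ?thesis unfolding e using True by simp
    next
      case False
      have "(\<Sum>p2\<in>{p2\<in>BJ ?P2 (?V - A). p2 i = i}. q ^ invs ?P2 p2) =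
            q ^ rk (?V - A) i * SW q (?P2 - {i}) (?V - A - {i})"
        by (rule sum_fix_min) (use i False in auto)
      also have "SW q (?P2 - {i}) (?V - A - {i}) = ff q (card (?P2 - {i}))"
      proof (rule SW_card)
        have "card (?V - A - {i}) = card (?V - A) - 1" using False i by simp
        also have "card (?V - A) = n - (i - 1)" using AV cA fA by (simp add: card_Diff_subset)
        finally show "card (?P2 - {i}) = card (?V - A - {i})" using i by simp
      qed auto
      also have "card (?P2 - {i}) = n - i" using i by simp
      finally show ?thesis using False by simp
    qed
    finally show ?thesis .
  qed
  finally show ?thesis by (simp add: power_add)
qed



definition NN :: "real \<Rightarrow> nat \<Rightarrow> nat \<Rightarrow> real" where
  "NN q a b = (\<Sum>s\<in>{0..a}. q ^ (s * s) * q ^ (2 * s) * gq q a (a - s) * gq q b s)"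

definition DD :: "real \<Rightarrow> nat \<Rightarrow> nat \<Rightarrow> real" where
  "DD q a b = (\<Sum>s\<in>{0..a}. q ^ (s * s) * 1 * gq q a (a - s) * gq q b s)"

lemma card_L: "1 \<le> i \<Longrightarrow> i \<le> n \<Longrightarrow> card {u \<in> {1..n} - {i}. u < i} = i - 1"
proof -
  assume "1 \<le> i" "i \<le> n"
  hence "{u \<in> {1..n} - {i}. u < i} = {1..i-1}" by auto
  thus ?thesis by simp
qed

lemma card_R: "1 \<le> i \<Longrightarrow> i \<le> n \<Longrightarrow> card {u \<in> {1..n} - {i}. i \<le> u} = n - i"
proof -
  assume "1 \<le> i" "i \<le> n"
  hence "{u \<in> {1..n} - {i}. i \<le> u} = {i+1..n}" by auto
  thus ?thesis by simp
qed

lemma W_formula: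
  assumes i: "1 \<le> i" "i \<le> n"
  shows "(\<Sum>p\<in>BJ {1..n} {1..n}. if p i = i then q ^ invs {1..n} p else 0)
        = ff q (i - 1) * ff q (n - i) * NN q (i - 1) (n - i)"
proof -
  let ?P1 = "{1..i-1}" and ?P2 = "{i..n}" and ?V = "{1..n}"
  define U where "U = ?V - {i}"
  define L where "L = {u \<in> U. u < i}"
  define R where "R = {u \<in> U. i \<le> u}"
  have PP: "?P1 \<union> ?P2 = ?V" using i by auto
  have cP1: "card ?P1 = i - 1" by simp
  have "(\<Sum>p\<in>BJ ?V ?V. if p i = i then q ^ invs ?V p else 0)
      = (\<Sum>p\<in>BJ (?P1 \<union> ?P2) ?V. if p i = i then q ^ invs (?P1 \<union> ?P2) p else 0)"
    unfolding PP ..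
  also have "\<dots> = (\<Sum>A\<in>{A. A \<subseteq> ?V \<and> card A = card ?P1}. \<Sum>pp\<in>BJ ?P1 A \<times> BJ ?P2 (?V - A).
      (if mg ?P1 (fst pp) (snd pp) i = i then q ^ invs (?P1 \<union> ?P2) (mg ?P1 (fst pp) (snd pp)) else 0))"
    by (rule cut_sum) auto
  also have "\<dots> = (\<Sum>A\<in>{A. A \<subseteq> ?V \<and> card A = i - 1}.
      ff q (i - 1) * ff q (n - i) * (if i \<notin> A then q ^ (cross ?V A + rk (?V - A) i) else 0))"
    unfolding cP1 by (rule sum.cong[OF refl]) (rule inner_fix[OF i], auto)
  also have "\<dots> = ff q (i - 1) * ff q (n - i) *
      (\<Sum>A\<in>{A. A \<subseteq> ?V \<and> card A = i - 1}. if i \<notin> A then q ^ (cross ?V A + rk (?V - A) i) else 0)"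
    by (simp add: sum_distrib_left)
  also have "(\<Sum>A\<in>{A. A \<subseteq> ?V \<and> card A = i - 1}. if i \<notin> A then q ^ (cross ?V A + rk (?V - A) i) else 0)
      = (\<Sum>A\<in>{A \<in> {A. A \<subseteq> ?V \<and> card A = i - 1}. i \<notin> A}. q ^ (cross ?V A + rk (?V - A) i))"
    by (rule sum.inter_filter[symmetric]) simp
  also have "{A \<in> {A. A \<subseteq> ?V \<and> card A = i - 1}. i \<notin> A} = {A. A \<subseteq> U \<and> card A = card L}"
    using card_L[OF i] unfolding U_def L_def by auto
  also have "(\<Sum>A\<in>{A. A \<subseteq> U \<and> card A = card L}. q ^ (cross ?V A + rk (?V - A) i))
      = (\<Sum>A\<in>{A. A \<subseteq> U \<and> card A = card L}. q ^ cross U A * (\<lambda>s. q ^ (2 * s)) (card (A \<inter> R)))"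
  proof (rule sum.cong[OF refl])
    fix A assume A: "A \<in> {A. A \<subseteq> U \<and> card A = card L}"
    have "cross ?V A + rk (?V - A) i = cross U A + 2 * card (A \<inter> R)"
      using cross_rk_fix[OF i, of A] A unfolding U_def L_def R_def by auto
    thus "q ^ (cross ?V A + rk (?V - A) i) = q ^ cross U A * (\<lambda>s. q ^ (2 * s)) (card (A \<inter> R))"
      by (simp add: power_add)
  qed
  also have "\<dots> = (\<Sum>s\<in>{0..card L}. q ^ (s * s) * (\<lambda>s. q ^ (2 * s)) s * GS q L (card L - s) * GS q R s)"
    unfolding L_def R_def by (rule split_sum) (simp add: U_def)
  also have "\<dots> = NN q (i - 1) (n - i)"
  proof -
    have cL: "card L = i - 1" using card_L[OF i] by (simp add: L_def U_def)
    have cR: "card R = n - i" using card_R[OF i] by (simp add: R_def U_def)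
    have fL: "finite L" "finite R" by (auto simp: L_def R_def U_def)
    show ?thesis unfolding NN_def using GS_card[OF fL(1)] GS_card[OF fL(2)] cL cR by simp
  qed
  finally show ?thesis .
qed

lemma D_formula:
  assumes i: "1 \<le> i" "i \<le> n"
  shows "ff q (n - 1) = ff q (i - 1) * ff q (n - i) * DD q (i - 1) (n - i)"
proof -
  define U where "U = {1..n-1}"
  define L where "L = {u \<in> U. u < i}"
  define R where "R = {u \<in> U. i \<le> u}"
  have "L = {1..i-1}" using i by (auto simp: L_def U_def)
  hence cL: "card L = i - 1" by simp
  have "R = {i..n-1}" using i by (auto simp: R_def U_def)
  hence cR: "card R = n - i" using i by simp
  have fL: "finite L" "finite R" by (auto simp: L_def R_def U_def)
  have "GS q U (card L) = (\<Sum>A\<in>{A. A \<subseteq> U \<and> card A = card L}. q ^ cross U A * (\<lambda>s. 1) (card (A \<inter> R)))"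
    by (simp add: GS_def)
  also have "\<dots> = (\<Sum>s\<in>{0..card L}. q ^ (s * s) * (\<lambda>s. 1) s * GS q L (card L - s) * GS q R s)"
    unfolding L_def R_def by (rule split_sum) (simp add: U_def)
  also have "\<dots> = DD q (i - 1) (n - i)"
    unfolding DD_def using GS_card[OF fL(1)] GS_card[OF fL(2)] cL cR by simp
  finally have "gq q (n - 1) (i - 1) = DD q (i - 1) (n - i)"
    using GS_card[of U q] cL by (simp add: U_def)
  moreover have "gq q (n - 1) (i - 1) * ff q (i - 1) * ff q (n - 1 - (i - 1)) = ff q (n - 1)"
    by (rule gq_ff) (use i in auto)
  moreover have "n - 1 - (i - 1) = n - i" using i by simp
  ultimately show ?thesis by (simp add: algebra_simps)
qed



context
  fixes q :: real
  assumes q0: "0 < q" and q1: "q < 1"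
begin

definition PP :: "nat \<Rightarrow> real" where "PP k = (\<Prod>j=1..k. (1 - q ^ j))"

lemma PP_Suc: "PP (Suc k) = PP k * (1 - q ^ Suc k)"
  unfolding PP_def by (simp add: prod.cl_ivl_Suc)

lemma PP_pos: "PP k > 0"
  unfolding PP_def using q0 q1 by (intro prod_pos) (auto simp: power_less_one_iff)

lemma ee_closed: "ee q j * (1 - q) = 1 - q ^ j"
  using q1 by (simp add: ee_def sum_gp_strict)

lemma ee_pos: "j \<ge> 1 \<Longrightarrow> ee q j > 0"
proof -
  assume j: "j \<ge> 1"
  have "q ^ j < 1" using j q0 q1 by (simp add: power_less_one_iff)
  hence "ee q j * (1 - q) > 0" using ee_closed[of j] by simp
  thus ?thesis using q1 by (simp add: zero_less_mult_iff)
qed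

lemma ff_PP: "ff q k * (1 - q) ^ k = PP k"
proof (induction k)
  case 0 thus ?case by (simp add: ff_def PP_def)
next
  case (Suc k)
  have "ff q (Suc k) * (1 - q) ^ Suc k = (ee q (Suc k) * (1 - q)) * (ff q k * (1 - q) ^ k)"
    by (simp add: ff_Suc algebra_simps)
  also have "\<dots> = PP (Suc k)" using Suc ee_closed[of "Suc k"] by (simp add: PP_Suc mult.commute)
  finally show ?case .
qed

lemma ff_pos: "ff q k > 0"
proof -
  have "ff q k * (1 - q) ^ k > 0" using ff_PP PP_pos by simp
  moreover have "(1 - q) ^ k > 0" using q1 by simp
  ultimately show ?thesis using q1 by (simp add: zero_less_mult_iff)
qed

lemma gq_PP: "k \<le> m \<Longrightarrow> gq q m k * PP k * PP (m - k) = PP m"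
proof -
  assume km: "k \<le> m"
  have "gq q m k * PP k * PP (m - k) = gq q m k * (ff q k * (1 - q) ^ k) * (ff q (m - k) * (1 - q) ^ (m - k))"
    by (simp add: ff_PP)
  also have "\<dots> = (gq q m k * ff q k * ff q (m - k)) * (1 - q) ^ (k + (m - k))"
    by (simp add: power_add algebra_simps)
  also have "\<dots> = PP m" using gq_ff[OF km, of q] km ff_PP[of m] by simp
  finally show ?thesis .
qed

definition tt :: "nat \<Rightarrow> nat \<Rightarrow> real" where
  "tt m s = (if s \<le> m then PP m / PP (m - s) else 0)"

lemma gq_tt: "gq q m s = tt m s / PP s"
proof (cases "s \<le> m")
  case True
  thus ?thesis using gq_PP[OF True] PP_pos[of s] PP_pos[of "m - s"]
    by (simp add: tt_def field_simps)
next
  case False thus ?thesis by (simp add: tt_def gq_big)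
qed

lemma gq_tt': "s \<le> m \<Longrightarrow> gq q m (m - s) = tt m s / PP s"
proof -
  assume sm: "s \<le> m"
  have "m - s \<le> m" by simp
  from gq_PP[OF this] have "gq q m (m - s) * PP (m - s) * PP s = PP m" using sm by simp
  thus ?thesis using sm PP_pos[of s] PP_pos[of "m - s"] by (simp add: tt_def field_simps)
qed

definition QQ :: "nat \<Rightarrow> nat \<Rightarrow> real" where "QQ k s = (\<Prod>j=1..s. (1 - q ^ (k + j)))"

lemma PP_add: "PP (k + s) = PP k * QQ k s"
  by (induction s) (simp_all add: QQ_def PP_def prod.cl_ivl_Suc)

lemma QQ_bounds: "0 \<le> QQ k s \<and> QQ k s \<le> 1 \<and> 1 - (\<Sum>j=1..s. q ^ (k + j)) \<le> QQ k s"
proof (induction s)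
  case 0 thus ?case by (simp add: QQ_def)
next
  case (Suc s)
  let ?x = "q ^ (k + Suc s)"
  have x: "0 \<le> ?x" "?x \<le> 1" using q0 q1 power_le_one[of q "k + Suc s"] by auto
  have QS: "QQ k (Suc s) = QQ k s * (1 - ?x)" by (simp add: QQ_def prod.cl_ivl_Suc)
  have S: "(\<Sum>j=1..Suc s. q ^ (k + j)) = (\<Sum>j=1..s. q ^ (k + j)) + ?x" by (simp add: sum.cl_ivl_Suc)
  have Snn: "0 \<le> (\<Sum>j=1..s. q ^ (k + j))" using q0 by (auto intro: sum_nonneg)
  have "1 - (\<Sum>j=1..s. q ^ (k + j)) - ?x \<le> (1 - (\<Sum>j=1..s. q ^ (k + j))) * (1 - ?x)"
    using mult_nonneg_nonneg[OF x(1) Snn] by (simp add: algebra_simps)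
  also have "\<dots> \<le> QQ k s * (1 - ?x)" using Suc x by (intro mult_right_mono) auto
  finally have lb: "1 - (\<Sum>j=1..Suc s. q ^ (k + j)) \<le> QQ k (Suc s)" using QS S by simp
  have "QQ k s * (1 - ?x) \<le> 1" using Suc x by (simp add: mult_le_one)
  thus ?case using QS lb Suc x by simp
qed

lemma sum_geo_tail: "(\<Sum>j=1..s. q ^ (k + j)) \<le> q ^ (k + 1) / (1 - q)"
proof -
  have "(\<Sum>j=1..s. q ^ (k + j)) = q ^ (k + 1) * (\<Sum>j<s. q ^ j)"
  proof -
    have "(\<Sum>j=1..s. q ^ (k + j)) = (\<Sum>j<s. q ^ (k + Suc j))"
      by (rule sum.reindex_bij_witness[of _ Suc "\<lambda>j. j - 1"]) auto
    also have "\<dots> = q ^ (k + 1) * (\<Sum>j<s. q ^ j)" by (simp add: sum_distrib_left power_add mult.assoc)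
    finally show ?thesis .
  qed
  also have "(\<Sum>j<s. q ^ j) = (1 - q ^ s) / (1 - q)" using q1 by (simp add: sum_gp_strict)
  also have "q ^ (k + 1) * ((1 - q ^ s) / (1 - q)) \<le> q ^ (k + 1) / (1 - q)"
    using q0 q1 by (simp add: divide_right_mono mult_left_le zero_le_power)
  finally show ?thesis .
qed

lemma tt_bounds: "0 \<le> tt m s" "tt m s \<le> 1" "1 - tt m s \<le> q ^ (m + 1) / ((1 - q) * q ^ s)"
proof -
  have "0 \<le> tt m s \<and> tt m s \<le> 1 \<and> 1 - tt m s \<le> q ^ (m + 1) / ((1 - q) * q ^ s)"
  proof (cases "s \<le> m")
    case True
    define k where "k = m - s"
    have m: "m = k + s" using True by (simp add: k_def)
    have tq: "tt m s = QQ k s" using True PP_pos[of k] by (simp add: tt_def m PP_add)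
    have "1 - tt m s \<le> q ^ (k + 1) / (1 - q)"
      using QQ_bounds[of k s] sum_geo_tail[of k s] tq by linarith
    also have "q ^ (k + 1) / (1 - q) = q ^ (m + 1) / ((1 - q) * q ^ s)"
      using q0 q1 by (simp add: m field_simps power_add)
    finally show ?thesis using QQ_bounds[of k s] tq by simp
  next
    case False
    have "q ^ s \<le> q ^ (m + 1)" using False q0 q1 by (intro power_decreasing) auto
    hence "1 \<le> q ^ (m + 1) / q ^ s" using q0 by simp
    also have "\<dots> \<le> q ^ (m + 1) / ((1 - q) * q ^ s)"
      using q0 q1 by (intro divide_left_mono) (auto intro: mult_pos_pos simp: mult_le_cancel_right1)
    finally show ?thesis using False by (simp add: tt_def)
  qed
  thus "0 \<le> tt m s" "tt m s \<le> 1" "1 - tt m s \<le> q ^ (m + 1) / ((1 - q) * q ^ s)" by auto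
qed

end



context
  fixes q :: real
  assumes q0: "0 < q" and q1: "q < 1"
begin

lemma nu_Suc: "nu_weight q (Suc s) = nu_weight q s * (q ^ (2 * s + 1) / (1 - q ^ Suc s) ^ 2)"
  unfolding nu_weight_def by (simp add: prod.cl_ivl_Suc)

lemma nu_PP: "nu_weight q s * PP q s ^ 2 = q ^ (s * s)"
proof (induction s)
  case 0 thus ?case by (simp add: nu_weight_def PP_def[OF q0 q1])
next
  case (Suc s)
  have "q ^ Suc s < 1" using q0 q1 by (rule power_Suc_less_one)
  define x where "x = q ^ Suc s"
  have ne: "1 - x \<noteq> 0" using \<open>q ^ Suc s < 1\<close> by (simp add: x_def)
  have a: "nu_weight q (Suc s) = nu_weight q s * (q ^ (2 * s + 1) / (1 - x) ^ 2)"
    unfolding x_def by (rule nu_Suc)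
  have b: "PP q (Suc s) = PP q s * (1 - x)" unfolding x_def by (rule PP_Suc[OF q0 q1])
  have "nu_weight q (Suc s) * PP q (Suc s) ^ 2
      = (nu_weight q s * PP q s ^ 2) * q ^ (2 * s + 1)"
  proof -
    have "(1 - x) ^ 2 \<noteq> 0" using ne by simp
    hence "nu_weight q s * (q ^ (2 * s + 1) / (1 - x) ^ 2) * (PP q s ^ 2 * (1 - x) ^ 2)
         = (nu_weight q s * PP q s ^ 2) * q ^ (2 * s + 1)" by simp
    thus ?thesis unfolding a b by (simp add: power_mult_distrib)
  qed
  also have "\<dots> = q ^ (s * s + (2 * s + 1))" using Suc by (simp add: power_add)
  also have "s * s + (2 * s + 1) = Suc s * Suc s" by simp

  finally show ?case .
qed

lemma nu_pos: "nu_weight q s > 0"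
  unfolding nu_weight_def
proof (intro prod_pos ballI)
  fix a assume a: "a \<in> {1..s}"
  hence "q ^ a < 1" using q0 q1 by (simp add: power_less_one_iff)
  hence "(1 - q ^ a) ^ 2 > 0" by simp
  thus "0 < q ^ (2 * a - 1) / (1 - q ^ a)\<^sup>2" using q0 by simp
qed

lemma summable_v: "summable (\<lambda>s. nu_weight q s / q ^ s)"
proof -
  have "(1 - q)^2 / 2 > 0" using q1 by simp
  then obtain N where N: "q ^ N < (1 - q)^2 / 2" using real_arch_pow_inv[OF _ q1] by blast
  show ?thesis
  proof (rule summable_ratio_test[where c = "1/2" and N = N])
    fix s assume s: "N \<le> s"
    let ?v = "\<lambda>s. nu_weight q s / q ^ s"
    have v_pos: "?v s > 0" using nu_pos q0 by simp
    have rec: "?v (Suc s) = ?v s * (q ^ (2 * s) / (1 - q ^ Suc s) ^ 2)"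
      using q0 by (simp add: nu_Suc field_simps power_add mult_2)
    have "q ^ (2 * s) \<le> q ^ N" using s q0 q1 by (intro power_decreasing) auto
    moreover have "(1 - q) ^ 2 \<le> (1 - q ^ Suc s) ^ 2"
    proof -
      have "q ^ Suc s \<le> q" using q0 q1 by (simp add: mult_left_le power_le_one)
      moreover have "q ^ Suc s \<ge> 0" using q0 by simp
      ultimately show ?thesis using q1 by (intro power_mono) auto
    qed
    ultimately have "q ^ (2 * s) / (1 - q ^ Suc s) ^ 2 \<le> ((1 - q)^2 / 2) / (1 - q) ^ 2"
      using N q1 by (intro frac_le) auto
    also have "\<dots> = 1/2" using q1 by simp
    finally have r: "q ^ (2 * s) / (1 - q ^ Suc s) ^ 2 \<le> 1/2" .
    have "?v (Suc s) \<le> 1/2 * ?v s"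
      unfolding rec using mult_left_mono[OF r, of "?v s"] v_pos by (simp add: mult.commute)
    moreover have "?v (Suc s) \<ge> 0" using nu_pos[of "Suc s"] q0 by simp
    ultimately show "norm (?v (Suc s)) \<le> 1/2 * norm (?v s)" using v_pos by (simp only: real_norm_def abs_of_pos abs_of_nonneg)
  qed simp
qed

lemma nu_le_v: "nu_weight q s \<le> nu_weight q s / q ^ s"
proof -
  have "q ^ s \<le> 1" "q ^ s > 0" using q0 q1 by (auto simp: power_le_one)
  thus ?thesis using nu_pos[of s] by (simp add: le_divide_eq mult_left_le)
qed

lemma summable_nu_c:
  assumes c: "\<And>s. 0 \<le> c s \<and> c s \<le> 1"
  shows "summable (\<lambda>s. nu_weight q s * c s)"
proof (rule summable_comparison_test'[OF summable_v, of 0])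
  fix n :: nat
  have "norm (nu_weight q n * c n) = nu_weight q n * c n"
    using c[of n] nu_pos[of n] by (simp add: abs_mult)
  also have "\<dots> \<le> nu_weight q n" using c[of n] nu_pos[of n] by (simp add: mult_left_le)
  also have "\<dots> \<le> nu_weight q n / q ^ n" by (rule nu_le_v)
  finally show "norm (nu_weight q n * c n) \<le> nu_weight q n / q ^ n" .
qed

end



context
  fixes q :: real
  assumes q0: "0 < q" and q1: "q < 1"
begin

lemma X_suminf:
  "(\<Sum>s\<in>{0..a}. q ^ (s * s) * c s * gq q a (a - s) * gq q b s)
   = (\<Sum>s. nu_weight q s * c s * tt q a s * tt q b s)"
proof -
  have "(\<Sum>s. nu_weight q s * c s * tt q a s * tt q b s) = (\<Sum>s\<in>{0..a}. nu_weight q s * c s * tt q a s * tt q b s)"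
    by (rule suminf_finite) (auto simp: tt_def[OF q0 q1])
  also have "\<dots> = (\<Sum>s\<in>{0..a}. q ^ (s * s) * c s * gq q a (a - s) * gq q b s)"
  proof (rule sum.cong[OF refl])
    fix s assume "s \<in> {0..a}"
    hence sa: "s \<le> a" by simp
    have P: "PP q s > 0" by (rule PP_pos[OF q0 q1])
    have e1: "gq q a (a - s) = tt q a s / PP q s" by (rule gq_tt'[OF q0 q1 sa])
    have e2: "gq q b s = tt q b s / PP q s" by (rule gq_tt[OF q0 q1])
    show "nu_weight q s * c s * tt q a s * tt q b s = q ^ (s * s) * c s * gq q a (a - s) * gq q b s"
      unfolding e1 e2 nu_PP[OF q0 q1, symmetric]
      using P by (simp add: field_simps power2_eq_square)
  qed
  finally show ?thesis by simp
qed

definition vv :: "nat \<Rightarrow> real" where "vv s = nu_weight q s / q ^ s"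

lemma three_le_one:
  fixes x y z :: real
  assumes "0 \<le> x" "x \<le> 1" "0 \<le> y" "y \<le> 1" "0 \<le> z" "z \<le> 1"
  shows "0 \<le> x * y * z \<and> x * y * z \<le> 1"
  using assms by (auto intro!: mult_le_one mult_nonneg_nonneg)

lemma X_bound:
  assumes c: "\<And>s. 0 \<le> c s \<and> c s \<le> 1"
  shows "\<bar>(\<Sum>s. nu_weight q s * c s * tt q a s * tt q b s) - (\<Sum>s. nu_weight q s * c s)\<bar>
         \<le> (q ^ (a + 1) + q ^ (b + 1)) / (1 - q) * (\<Sum>s. vv s)"
proof -
  have svv: "summable vv" using summable_v[OF q0 q1] by (simp add: vv_def[abs_def])
  have tb: "\<And>m s. 0 \<le> tt q m s \<and> tt q m s \<le> 1" using tt_bounds[OF q0 q1] by auto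
  have s1: "summable (\<lambda>s. nu_weight q s * c s)" by (rule summable_nu_c[OF q0 q1 c])
  have s2: "summable (\<lambda>s. nu_weight q s * (c s * tt q a s * tt q b s))"
    by (rule summable_nu_c[OF q0 q1]) (use c tb three_le_one in blast)
  have s2': "summable (\<lambda>s. nu_weight q s * c s * tt q a s * tt q b s)"
    using s2 by (simp add: mult.assoc)
  let ?K = "(q ^ (a + 1) + q ^ (b + 1)) / (1 - q)"
  have "(\<Sum>s. nu_weight q s * c s) - (\<Sum>s. nu_weight q s * c s * tt q a s * tt q b s)
      = (\<Sum>s. nu_weight q s * c s - nu_weight q s * c s * tt q a s * tt q b s)"
    by (rule suminf_diff[OF s1 s2'])
  also have "\<dots> \<le> (\<Sum>s. ?K * vv s)"
  proof (rule suminf_le)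
    fix s
    have nu: "nu_weight q s > 0" by (rule nu_pos[OF q0 q1])
    have qs: "q ^ s > 0" using q0 by simp
    have ab: "1 - tt q a s * tt q b s \<le> (1 - tt q a s) + (1 - tt q b s)"
    proof -
      have "0 \<le> (1 - tt q a s) * (1 - tt q b s)" using tb[of a s] tb[of b s] by (intro mult_nonneg_nonneg) auto
      thus ?thesis by (simp add: algebra_simps)
    qed
    also have "\<dots> \<le> q ^ (a + 1) / ((1 - q) * q ^ s) + q ^ (b + 1) / ((1 - q) * q ^ s)"
      using tt_bounds(3)[OF q0 q1, of a s] tt_bounds(3)[OF q0 q1, of b s] by linarith
    also have "\<dots> = ?K / q ^ s" by (simp add: add_divide_distrib)
    finally have ab': "1 - tt q a s * tt q b s \<le> ?K / q ^ s" .
    have "nu_weight q s * c s - nu_weight q s * c s * tt q a s * tt q b s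
        = (nu_weight q s * c s) * (1 - tt q a s * tt q b s)" by (simp add: algebra_simps)
    also have "\<dots> \<le> nu_weight q s * (1 - tt q a s * tt q b s)"
      using c[of s] nu tb[of a s] tb[of b s]
      by (intro mult_right_mono) (auto simp: mult_left_le mult_le_one)
    also have "\<dots> \<le> nu_weight q s * (?K / q ^ s)"
      using nu ab' by (intro mult_left_mono) auto
    also have "\<dots> = ?K * vv s" by (simp add: vv_def)
    finally show "nu_weight q s * c s - nu_weight q s * c s * tt q a s * tt q b s \<le> ?K * vv s" .
  next
    show "summable (\<lambda>s. nu_weight q s * c s - nu_weight q s * c s * tt q a s * tt q b s)"
      using s1 s2' by (rule summable_diff)
    show "summable (\<lambda>s. ?K * vv s)" using svv by (rule summable_mult)
  qed
  also have "\<dots> = ?K * (\<Sum>s. vv s)" using svv by (rule suminf_mult)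
  finally have up: "(\<Sum>s. nu_weight q s * c s) - (\<Sum>s. nu_weight q s * c s * tt q a s * tt q b s) \<le> ?K * (\<Sum>s. vv s)" .
  have "(\<Sum>s. nu_weight q s * c s * tt q a s * tt q b s) \<le> (\<Sum>s. nu_weight q s * c s)"
  proof (rule suminf_le[OF _ s2' s1])
    fix s
    have "nu_weight q s * c s * (tt q a s * tt q b s) \<le> nu_weight q s * c s * 1"
      using c[of s] nu_pos[OF q0 q1, of s] tb[of a s] tb[of b s]
      by (intro mult_left_mono) (auto intro: mult_le_one)
    thus "nu_weight q s * c s * tt q a s * tt q b s \<le> nu_weight q s * c s" by (simp add: mult.assoc)
  qed
  thus ?thesis using up by linarith
qed

end



lemma ratio_bound:
  fixes N D N' D' :: real
  assumes "1 \<le> D" "1 \<le> D'" "0 \<le> N'" "N' \<le> D'"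
  shows "\<bar>N / D - N' / D'\<bar> \<le> \<bar>N - N'\<bar> + \<bar>D - D'\<bar>"
proof -
  have eq: "N / D - N' / D' = (N - N') / D + (N' / D') * ((D' - D) / D)"
    using assms by (simp add: field_simps)
  have f1: "\<bar>(N - N') / D\<bar> \<le> \<bar>N - N'\<bar>"
    using assms mult_left_mono[of 1 D "\<bar>N - N'\<bar>"] by (simp add: abs_divide divide_le_eq)
  have f2: "\<bar>(N' / D') * ((D' - D) / D)\<bar> \<le> \<bar>D - D'\<bar>"
  proof -
    have a: "\<bar>N' / D'\<bar> \<le> 1" using assms by (simp add: abs_divide)
    have b: "\<bar>(D' - D) / D\<bar> \<le> \<bar>D - D'\<bar>"
      using assms mult_left_mono[of 1 D "\<bar>D - D'\<bar>"] by (simp add: abs_divide divide_le_eq abs_minus_commute)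
    have "\<bar>(N' / D') * ((D' - D) / D)\<bar> = \<bar>N' / D'\<bar> * \<bar>(D' - D) / D\<bar>" by (simp add: abs_mult)
    also have "\<dots> \<le> 1 * \<bar>D - D'\<bar>" using a b by (intro mult_mono) auto
    finally show ?thesis by simp
  qed
  show ?thesis unfolding eq
    using abs_triangle_ineq[of "(N - N') / D" "(N' / D') * ((D' - D) / D)"] f1 f2 by linarith
qed

context
  fixes q :: real
  assumes q0: "0 < q" and q1: "q < 1"
begin

definition Ninf where "Ninf = (\<Sum>s. nu_weight q s * q ^ (2 * s))"
definition Dinf where "Dinf = (\<Sum>s. nu_weight q s * 1)"
definition hh where "hh a b = NN q a b / DD q a b"
definition CB where "CB = 2 * (\<Sum>s. vv q s) / (1 - q)"

lemma cN: "\<And>s. 0 \<le> q ^ (2 * s) \<and> q ^ (2 * s) \<le> (1::real)"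
  using q0 q1 by (auto intro: power_le_one)

lemma cD: "\<And>s::nat. 0 \<le> (1::real) \<and> (1::real) \<le> 1" by simp

lemma NN_suminf: "NN q a b = (\<Sum>s. nu_weight q s * q ^ (2 * s) * tt q a s * tt q b s)"
  unfolding NN_def by (rule X_suminf[OF q0 q1])

lemma DD_suminf: "DD q a b = (\<Sum>s. nu_weight q s * 1 * tt q a s * tt q b s)"
  unfolding DD_def by (rule X_suminf[OF q0 q1])

lemma tt0: "tt q m 0 = 1"
  using PP_pos[OF q0 q1, of m] by (simp add: tt_def[OF q0 q1])

lemma nu0: "nu_weight q 0 = 1" by (simp add: nu_weight_def)

lemma DD_ge1: "1 \<le> DD q a b"
proof -
  have tb: "\<And>m s. 0 \<le> tt q m s \<and> tt q m s \<le> 1" using tt_bounds[OF q0 q1] by auto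
  have sm: "summable (\<lambda>s. nu_weight q s * (1 * tt q a s * tt q b s))"
  proof (rule summable_nu_c[OF q0 q1])
    fix s show "0 \<le> 1 * tt q a s * tt q b s \<and> 1 * tt q a s * tt q b s \<le> 1"
      using tb[of a s] tb[of b s] mult_le_one[of "tt q a s" "tt q b s"] by simp
  qed
  have "(\<Sum>s\<in>{0}. nu_weight q s * (1 * tt q a s * tt q b s)) \<le> (\<Sum>s. nu_weight q s * (1 * tt q a s * tt q b s))"
  proof (rule sum_le_suminf[OF sm])
    fix n :: nat
    have "0 \<le> nu_weight q n" using nu_pos[OF q0 q1, of n] by simp
    moreover have "0 \<le> tt q a n * tt q b n" using tb[of a n] tb[of b n] by simp
    ultimately show "0 \<le> nu_weight q n * (1 * tt q a n * tt q b n)" by simp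
  qed simp
  thus ?thesis unfolding DD_suminf by (simp add: tt0 nu0 mult.assoc)
qed

lemma Dinf_ge1: "1 \<le> Dinf"
proof -
  have sm: "summable (\<lambda>s. nu_weight q s * 1)" by (rule summable_nu_c[OF q0 q1]) simp
  have "(\<Sum>s\<in>{0}. nu_weight q s * 1) \<le> (\<Sum>s. nu_weight q s * 1)"
    by (rule sum_le_suminf[OF sm]) (use nu_pos[OF q0 q1] in \<open>auto intro: less_imp_le\<close>)
  thus ?thesis by (simp add: Dinf_def nu0)
qed

lemma Ninf_bounds: "0 \<le> Ninf" "Ninf \<le> Dinf"
proof -
  have s1: "summable (\<lambda>s. nu_weight q s * q ^ (2 * s))" by (rule summable_nu_c[OF q0 q1 cN])
  have s2: "summable (\<lambda>s. nu_weight q s * 1)" by (rule summable_nu_c[OF q0 q1]) simp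
  show "0 \<le> Ninf" unfolding Ninf_def
    by (rule suminf_nonneg[OF s1]) (use nu_pos[OF q0 q1] q0 in \<open>auto intro: less_imp_le\<close>)
  show "Ninf \<le> Dinf" unfolding Ninf_def Dinf_def
    by (rule suminf_le[OF _ s1 s2]) (use nu_pos[OF q0 q1] cN in \<open>auto intro: mult_left_le less_imp_le\<close>)
qed

lemma hh_bound: "\<bar>hh a b - Ninf / Dinf\<bar> \<le> CB * (q ^ (a + 1) + q ^ (b + 1))"
proof -
  have "\<bar>hh a b - Ninf / Dinf\<bar> \<le> \<bar>NN q a b - Ninf\<bar> + \<bar>DD q a b - Dinf\<bar>"
    unfolding hh_def by (rule ratio_bound[OF DD_ge1 Dinf_ge1 Ninf_bounds])
  also have "\<bar>NN q a b - Ninf\<bar> \<le> (q ^ (a + 1) + q ^ (b + 1)) / (1 - q) * (\<Sum>s. vv q s)"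
    unfolding NN_suminf Ninf_def by (rule X_bound[OF q0 q1 cN])
  also have "\<bar>DD q a b - Dinf\<bar> \<le> (q ^ (a + 1) + q ^ (b + 1)) / (1 - q) * (\<Sum>s. vv q s)"
    unfolding DD_suminf Dinf_def by (rule X_bound[OF q0 q1]) simp
  finally show ?thesis by (simp add: CB_def field_simps)
qed

end



lemma perms_BJ: "{p. p permutes {1..n}} = BJ {1..n} {1..(n::nat)}"
  unfolding BJ_def permutes_altdef by auto

lemma inversions_invs: "inversions n p = invs {1..n} p"
  unfolding inversions_def invs_def by (rule arg_cong[where f = card]) auto

lemma Z_ff: "mallows_Z q n = ff q n"
proof -
  have "mallows_Z q n = SW q {1..n} {1..n}"
    unfolding mallows_Z_def SW_def perms_BJ inversions_invs ..
  also have "\<dots> = ff q (card {1..n})" by (rule SW_card) auto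
  finally show ?thesis by simp
qed

lemma fp_sum: "real (fixed_points n p) = (\<Sum>i\<in>{1..n}. if p i = i then 1 else 0)"
proof -
  have "(\<Sum>i\<in>{1..n}. if p i = i then 1 else (0::real)) = (\<Sum>i\<in>{i\<in>{1..n}. p i = i}. 1)"
    by (rule sum.inter_filter[symmetric]) simp
  thus ?thesis by (simp add: fixed_points_def)
qed

context
  fixes q :: real
  assumes q0: "0 < q" and q1: "q < 1"
begin

lemma E_formula:
  assumes n: "1 \<le> n"
  shows "mallows_expected_fixed_points q n = (\<Sum>i\<in>{1..n}. hh q (i - 1) (n - i)) / ee q n"
proof -
  have num: "(\<Sum>p\<in>{p. p permutes {1..n}}. q ^ inversions n p * real (fixed_points n p))
      = (\<Sum>i\<in>{1..n}. ff q (i - 1) * ff q (n - i) * NN q (i - 1) (n - i))"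
  proof -
    have "(\<Sum>p\<in>{p. p permutes {1..n}}. q ^ inversions n p * real (fixed_points n p))
        = (\<Sum>p\<in>BJ {1..n} {1..n}. \<Sum>i\<in>{1..n}. if p i = i then q ^ invs {1..n} p else 0)"
      unfolding perms_BJ inversions_invs fp_sum
      by (rule sum.cong[OF refl]) (simp add: sum_distrib_left if_distrib cong: if_cong)
    also have "\<dots> = (\<Sum>i\<in>{1..n}. \<Sum>p\<in>BJ {1..n} {1..n}. if p i = i then q ^ invs {1..n} p else 0)"
      by (rule sum.swap)
    also have "\<dots> = (\<Sum>i\<in>{1..n}. ff q (i - 1) * ff q (n - i) * NN q (i - 1) (n - i))"
      by (rule sum.cong[OF refl]) (rule W_formula, auto)
    finally show ?thesis .
  qed
  have ffn: "ff q n = ee q n * ff q (n - 1)"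
    using ff_Suc[of q "n - 1"] n by simp
  have "mallows_expected_fixed_points q n
      = (\<Sum>i\<in>{1..n}. ff q (i - 1) * ff q (n - i) * NN q (i - 1) (n - i)) / ff q n"
    unfolding mallows_expected_fixed_points_def num Z_ff ..
  also have "\<dots> = (\<Sum>i\<in>{1..n}. ff q (i - 1) * ff q (n - i) * NN q (i - 1) (n - i) / ff q n)"
    by (rule sum_divide_distrib)
  also have "\<dots> = (\<Sum>i\<in>{1..n}. hh q (i - 1) (n - i) / ee q n)"
  proof (rule sum.cong[OF refl])
    fix i assume i: "i \<in> {1..n}"
    have D: "ff q (n - 1) = ff q (i - 1) * ff q (n - i) * DD q (i - 1) (n - i)"
      by (rule D_formula) (use i in auto)
    have p1: "ff q (i - 1) > 0" "ff q (n - i) > 0" using ff_pos[OF q0 q1] by auto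
    have p2: "ee q n > 0" using ee_pos[OF q0 q1 n] .
    have p3: "DD q (i - 1) (n - i) > 0" using DD_ge1[OF q0 q1, of "i - 1" "n - i"] by simp
    show "ff q (i - 1) * ff q (n - i) * NN q (i - 1) (n - i) / ff q n = hh q (i - 1) (n - i) / ee q n"
      unfolding ffn D hh_def[OF q0 q1] using p1 p2 p3 by (simp add: field_simps)
  qed
  also have "\<dots> = (\<Sum>i\<in>{1..n}. hh q (i - 1) (n - i)) / ee q n"
    by (rule sum_divide_distrib[symmetric])
  finally show ?thesis .
qed

end



theorem lemma6p1:
  fixes q :: real
  assumes "0 < q" and "q < 1"
  shows "(\<lambda>n. mallows_expected_fixed_points q n / real n)
           \<longlonglongrightarrow> (\<Sum>s. (mallows_nu q s * q ^ (2 * s) * (1 - q)))"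
proof -
  note q0 = assms(1) and q1 = assms(2)
  define L where "L = Ninf q / Dinf q"
  define A where "A n = (\<Sum>i\<in>{1..n}. hh q (i - 1) (n - i)) / real n" for n
  define C where "C = 2 * CB q / (1 - q)"
  have geo: "(\<Sum>j<n. q ^ (j + 1)) \<le> 1 / (1 - q)" for n
  proof -
    have "(\<Sum>j<n. q ^ (j + 1)) = q * ((1 - q ^ n) / (1 - q))"
      using q1 by (simp add: sum_distrib_left[symmetric] sum_gp_strict)
    also have "\<dots> \<le> 1 * (1 / (1 - q))"
      using q0 q1 power_le_one[of q n] by (intro mult_mono) (auto simp: divide_right_mono)
    finally show ?thesis by simp
  qed
  have CBnn: "CB q \<ge> 0"
  proof -
    have "\<bar>hh q 0 0 - Ninf q / Dinf q\<bar> \<le> CB q * (q ^ (0 + 1) + q ^ (0 + 1))" by (rule hh_bound[OF q0 q1])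
    moreover have "q ^ (0 + 1) + q ^ (0 + 1) > 0" using q0 by simp
    ultimately show ?thesis by (smt (verit) mult_neg_pos)
  qed
  have boundA: "\<bar>A n - L\<bar> \<le> C / real n" if n: "n \<ge> 1" for n
  proof -
    have "A n - L = (\<Sum>i\<in>{1..n}. hh q (i - 1) (n - i) - L) / real n"
      using n by (simp add: A_def sum_subtractf field_simps)
    hence "\<bar>A n - L\<bar> = \<bar>\<Sum>i\<in>{1..n}. hh q (i - 1) (n - i) - L\<bar> / real n" by simp
    also have "\<dots> \<le> (\<Sum>i\<in>{1..n}. \<bar>hh q (i - 1) (n - i) - L\<bar>) / real n"
      by (intro divide_right_mono sum_abs) simp
    also have "\<dots> \<le> (\<Sum>i\<in>{1..n}. CB q * (q ^ ((i - 1) + 1) + q ^ ((n - i) + 1))) / real n"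
      unfolding L_def by (intro divide_right_mono sum_mono hh_bound[OF q0 q1]) simp
    also have "(\<Sum>i\<in>{1..n}. CB q * (q ^ ((i - 1) + 1) + q ^ ((n - i) + 1)))
        = CB q * ((\<Sum>i\<in>{1..n}. q ^ ((i - 1) + 1)) + (\<Sum>i\<in>{1..n}. q ^ ((n - i) + 1)))"
      by (simp only: sum_distrib_left[symmetric] sum.distrib)
    also have "(\<Sum>i\<in>{1..n}. q ^ ((i - 1) + 1)) = (\<Sum>j<n. q ^ (j + 1))"
      by (rule sum.reindex_bij_witness[of _ "\<lambda>j. j + 1" "\<lambda>i. i - 1"]) auto
    also have "(\<Sum>i\<in>{1..n}. q ^ ((n - i) + 1)) = (\<Sum>j<n. q ^ (j + 1))"
      by (rule sum.reindex_bij_witness[of _ "\<lambda>j. n - j" "\<lambda>i. n - i"]) auto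
    also have "CB q * ((\<Sum>j<n. q ^ (j + 1)) + (\<Sum>j<n. q ^ (j + 1))) \<le> CB q * (1 / (1 - q) + 1 / (1 - q))"
      using geo[of n] CBnn by (intro mult_left_mono) auto
    also have "CB q * (1 / (1 - q) + 1 / (1 - q)) = C" by (simp add: C_def)
    finally show ?thesis using n by (simp add: divide_right_mono)
  qed
  have limA: "A \<longlonglongrightarrow> L"
  proof -
    have "(\<lambda>n. A n - L) \<longlonglongrightarrow> 0"
    proof (rule Lim_null_comparison)
      show "\<forall>\<^sub>F n in sequentially. norm (A n - L) \<le> C / real n"
        using boundA by (auto simp: eventually_sequentially intro!: exI[of _ 1])
      show "(\<lambda>n. C / real n) \<longlonglongrightarrow> 0" by (rule lim_const_over_n)
    qed
    thus ?thesis by (simp add: LIM_zero_iff)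
  qed
  have limE: "(\<lambda>n. ee q n) \<longlonglongrightarrow> 1 / (1 - q)"
  proof -
    have e: "ee q n = (1 - q ^ n) / (1 - q)" for n using q1 by (simp add: ee_def sum_gp_strict)
    have "(\<lambda>n. (1 - q ^ n) / (1 - q)) \<longlonglongrightarrow> (1 - 0) / (1 - q)"
      using q0 q1 by (intro tendsto_intros) auto
    thus ?thesis by (simp add: e)
  qed
  have lim1: "(\<lambda>n. A n / ee q n) \<longlonglongrightarrow> L / (1 / (1 - q))"
    by (rule tendsto_divide[OF limA limE]) (use q1 in simp)
  have ev: "\<forall>\<^sub>F n in sequentially. A n / ee q n = mallows_expected_fixed_points q n / real n"
  proof -
    have "A n / ee q n = mallows_expected_fixed_points q n / real n" if "n \<ge> 1" for n
      using E_formula[OF q0 q1 that] by (simp add: A_def)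
    thus ?thesis by (auto simp: eventually_sequentially intro!: exI[of _ 1])
  qed
  have lim2: "(\<lambda>n. mallows_expected_fixed_points q n / real n) \<longlonglongrightarrow> L * (1 - q)"
    using Lim_transform_eventually[OF lim1 ev] q1 by simp
  have rhs: "(\<Sum>s. mallows_nu q s * q ^ (2 * s) * (1 - q)) = L * (1 - q)"
  proof -
    have s1: "summable (\<lambda>s. nu_weight q s * q ^ (2 * s))" by (rule summable_nu_c[OF q0 q1 cN[OF q0 q1]])
    have "(\<Sum>s. mallows_nu q s * q ^ (2 * s) * (1 - q)) = (\<Sum>s. nu_weight q s * q ^ (2 * s) * ((1 - q) / Dinf q))"
      by (simp add: mallows_nu_def Dinf_def[OF q0 q1])
    also have "\<dots> = Ninf q * ((1 - q) / Dinf q)"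
      unfolding Ninf_def[OF q0 q1] by (rule suminf_mult2[OF s1, symmetric])
    finally show ?thesis by (simp add: L_def)
  qed
  show ?thesis using lim2 rhs by simp
qed


end
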